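(* Let $P$ be an atomized poset such that no two atoms of $P$ generate $P$. Suppose there is an atom $a_0$ with the following property: for any atoms $a_1,a_2$ of $P$ there exists an atom $a_3$ such that each of the sets $\{a_1,a_2,a_3\}$, $\{a_0,a_1,a_3\}$, $\{a_0,a_2,a_3\}$ has an upper bound in $P$. Then $|P|$ is simply connected.
   Context: For a poset $P$, $|P|$ denotes the geometric realization of the order complex of $P$ (simplices = finite nonempty chains). A poset $P$ is atomized if every element of $P$ lies above some minimal element and every finite set of minimal elements that has an upper bound in $P$ has a join in $P$. Minimal elements are atoms; a finite set of atoms generates $P$ if it has no upper bound in $P$. *)

theory Defs
  imports "HOL-Analysis.Analysis"
begin

text \<open>The poset is a type of class order (the poset P is UNIV).\<close>

definition is_atom :: "'a::order \<Rightarrow> bool" where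
  "is_atom x \<longleftrightarrow> (\<forall>y. y \<le> x \<longrightarrow> y = x)"

definition has_upper_bound :: "'a::order set \<Rightarrow> bool" where
  "has_upper_bound S \<longleftrightarrow> (\<exists>u. \<forall>s\<in>S. s \<le> u)"

definition is_join :: "'a::order set \<Rightarrow> 'a \<Rightarrow> bool" where
  "is_join S j \<longleftrightarrow> (\<forall>s\<in>S. s \<le> j) \<and> (\<forall>u. (\<forall>s\<in>S. s \<le> u) \<longrightarrow> j \<le> u)"

definition atomized :: "'a::order itself \<Rightarrow> bool" where
  "atomized _ \<longleftrightarrow>
     (\<forall>x::'a. \<exists>a. is_atom a \<and> a \<le> x) \<and>
     (\<forall>S::'a set. finite S \<and> S \<noteq> {} \<and> (\<forall>a\<in>S. is_atom a) \<and> has_upper_bound S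
        \<longrightarrow> (\<exists>j. is_join S j))"

definition generates :: "'a::order set \<Rightarrow> bool" where
  "generates S \<longleftrightarrow> finite S \<and> (\<forall>a\<in>S. is_atom a) \<and> \<not> has_upper_bound S"

definition is_chain :: "'a::order set \<Rightarrow> bool" where
  "is_chain C \<longleftrightarrow> (\<forall>x\<in>C. \<forall>y\<in>C. x \<le> y \<or> y \<le> x)"

text \<open>Closed geometric simplex spanned by a finite set C of vertices, as
  barycentric coordinate functions (product topology on 'a \<Rightarrow> real).\<close>
definition geom_simplex :: "'a set \<Rightarrow> ('a \<Rightarrow> real) set" where
  "geom_simplex C = {f. (\<forall>x. 0 \<le> f x) \<and> (\<forall>x. x \<notin> C \<longrightarrow> f x = 0) \<and> sum f C = 1}"

definition order_simplices :: "'a::order set set" where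
  "order_simplices = {C. finite C \<and> C \<noteq> {} \<and> is_chain C}"

definition realization_carrier :: "('a::order \<Rightarrow> real) set" where
  "realization_carrier = (\<Union>C\<in>(order_simplices::'a set set). geom_simplex C)"

text \<open>Weak (coherent) topology: a set is open iff its trace on every closed simplex is open.\<close>
definition realization_open :: "('a::order \<Rightarrow> real) set \<Rightarrow> bool" where
  "realization_open U \<longleftrightarrow> U \<subseteq> realization_carrier \<and>
     (\<forall>C\<in>(order_simplices::'a set set). openin (top_of_set (geom_simplex C)) (U \<inter> geom_simplex C))"

lemma istopology_realization_open: "istopology (realization_open :: ('a::order \<Rightarrow> real) set \<Rightarrow> bool)"
  unfolding istopology_def
proof (intro conjI allI impI)
  fix S T :: "('a \<Rightarrow> real) set"
  assume "realization_open S" "realization_open T"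
  then show "realization_open (S \<inter> T)"
  proof -
    have "openin (top_of_set (geom_simplex C)) ((S \<inter> T) \<inter> geom_simplex C)"
      if "C \<in> order_simplices" for C
    proof -
      have "(S \<inter> T) \<inter> geom_simplex C = (S \<inter> geom_simplex C) \<inter> (T \<inter> geom_simplex C)" by blast
      then show ?thesis
        using that \<open>realization_open S\<close> \<open>realization_open T\<close>
        by (simp add: realization_open_def openin_Int)
    qed
    then show ?thesis using \<open>realization_open S\<close> by (auto simp: realization_open_def)
  qed
next
  fix K :: "('a \<Rightarrow> real) set set"
  assume K: "\<forall>k\<in>K. realization_open k"
  have "\<Union>K \<subseteq> realization_carrier" using K by (auto simp: realization_open_def)
  moreover have "openin (top_of_set (geom_simplex C)) (\<Union>K \<inter> geom_simplex C)"
    if "C \<in> order_simplices" for C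
  proof -
    have "\<Union>K \<inter> geom_simplex C = \<Union>((\<lambda>k. k \<inter> geom_simplex C) ` K)" by auto
    moreover have "\<forall>k\<in>K. openin (top_of_set (geom_simplex C)) (k \<inter> geom_simplex C)"
      using K that by (auto simp: realization_open_def)
    ultimately show ?thesis by (metis (no_types, lifting) openin_Union image_iff)
  qed
  ultimately show "realization_open (\<Union>K)" by (simp add: realization_open_def)
qed

definition order_complex_realization :: "'a::order itself \<Rightarrow> ('a \<Rightarrow> real) topology" where
  "order_complex_realization _ = topology (realization_open :: ('a \<Rightarrow> real) set \<Rightarrow> bool)"

text \<open>Mirrors the library's simply_connected for sets: any two loops are homotopic as loops.
  (For nonempty spaces this is path-connected with trivial fundamental group.)\<close>
definition simply_connected_space :: "'a topology \<Rightarrow> bool" where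
  "simply_connected_space X \<longleftrightarrow>
     (\<forall>p q. pathin X p \<and> p 1 = p 0 \<and> pathin X q \<and> q 1 = q 0 \<longrightarrow>
        homotopic_with (\<lambda>r. r 1 = r 0) (top_of_set {0..1}) X p q)"

end

theory Submission
  imports Defs
begin


section \<open>Generic path algebra with constant paths\<close>

definition sp :: "real \<Rightarrow> real \<Rightarrow> (real \<Rightarrow> 'b) \<Rightarrow> real \<Rightarrow> 'b"
  where "sp a b g = (\<lambda>x. g((b - a) * x + a))"

lemma sp_in01: "u \<in> {0..1} \<Longrightarrow> w \<in> {0..1} \<Longrightarrow> x \<in> {0..1::real} \<Longrightarrow> (w - u) * x + u \<in> {0..1}"
proof -
  assume a: "u \<in> {0..1}" "w \<in> {0..1}" "x \<in> {0..1::real}"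
  have e: "(w - u) * x + u = (1-x)*u + x*w" by (simp add: algebra_simps)
  have "0 \<le> (1-x)*u" "0 \<le> x*w" using a by auto
  moreover have "(1-x)*u \<le> (1-x)" "x*w \<le> x" using a by (auto intro: mult_left_le)
  ultimately show ?thesis unfolding e by auto
qed

lemma path_sp:
  fixes g :: "real \<Rightarrow> 'b::topological_space"
  assumes "path g" "u \<in> {0..1}" "w \<in> {0..1}"
  shows "path (sp u w g)"
  unfolding path_def sp_def
  by (rule continuous_on_compose2[OF assms(1)[unfolded path_def]]) (auto intro!: continuous_intros sp_in01 assms)

lemma path_image_sp:
  assumes "u \<in> {0..1}" "w \<in> {0..1}"
  shows "path_image (sp u w g) \<subseteq> path_image g"
  unfolding path_image_def sp_def using sp_in01[OF assms] by auto

lemma cpath [simp]: "path (\<lambda>_::real. c)"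
  by (simp add: path_def)

lemma cpath_image: "path_image (\<lambda>_::real. c) = {c}"
  by (auto simp: path_image_def)

lemma hp_rid:
  fixes p :: "real \<Rightarrow> 'b::topological_space"
  assumes "path p" "path_image p \<subseteq> S"
  shows "homotopic_paths S (p +++ (\<lambda>_. pathfinish p)) p"
proof -
  have \<section>: "continuous_on {0..1} (\<lambda>t::real. if t \<le> 1/2 then 2 *\<^sub>R t else 1)"
    unfolding split_01
    by (rule continuous_on_cases continuous_intros | force simp: pathfinish_def joinpaths_def)+
  show ?thesis
    apply (rule homotopic_paths_sym)
    using assms unfolding pathfinish_def joinpaths_def
    by (intro \<section> continuous_on_cases continuous_intros homotopic_paths_reparametrize [where f = "\<lambda>t. if t \<le> 1/2 then 2 *\<^sub>R t else 1"]; force)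
qed

lemma hp_lid:
  fixes p :: "real \<Rightarrow> 'b::topological_space"
  assumes "path p" "path_image p \<subseteq> S"
  shows "homotopic_paths S ((\<lambda>_. pathstart p) +++ p) p"
proof -
  have "homotopic_paths S (reversepath p +++ (\<lambda>_. pathfinish (reversepath p))) (reversepath p)"
    using assms by (intro hp_rid) auto
  then have "homotopic_paths S (reversepath (reversepath p +++ (\<lambda>_. pathfinish (reversepath p)))) p"
    using homotopic_paths_reversepath by (metis reversepath_reversepath)
  moreover have "reversepath (\<lambda>_::real. pathstart p) = (\<lambda>_. pathstart p)"
    by (simp add: reversepath_def)
  moreover have "reversepath (reversepath p +++ (\<lambda>_. pathstart p)) = reversepath (\<lambda>_. pathstart p) +++ p"
    by (subst reversepath_joinpaths) (auto simp: pathfinish_def pathstart_def reversepath_def)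
  ultimately show ?thesis
    by simp
qed

lemma hp_rinv:
  fixes p :: "real \<Rightarrow> 'b::topological_space"
  assumes "path p" "path_image p \<subseteq> S"
  shows "homotopic_paths S (p +++ reversepath p) (\<lambda>_. pathstart p)"
proof -
  have p: "continuous_on {0..1} p" 
    using assms by (auto simp: path_def)
  let ?A = "{0..1} \<times> {0..1}"
  have "continuous_on ?A (\<lambda>x. (sp 0 (fst x) p +++ reversepath (sp 0 (fst x) p)) (snd x))"
    unfolding joinpaths_def sp_def reversepath_def path_def add_0_right diff_0_right
  proof (rule continuous_on_cases_le)
    show "continuous_on {x \<in> ?A. snd x \<le> 1/2} (\<lambda>t. p (fst t * (2 * snd t)))"
         "continuous_on {x \<in> ?A. 1/2 \<le> snd x} (\<lambda>t. p (fst t * (1 - (2 * snd t - 1))))"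
         "continuous_on ?A snd"
      by (intro continuous_on_compose2 [OF p] continuous_intros; auto simp: mult_le_one)+
  qed (auto simp: algebra_simps)
  then show ?thesis
    using assms
    apply (subst homotopic_paths_sym_eq)
    unfolding homotopic_paths_def homotopic_with_def
    apply (rule_tac x="(\<lambda>y. (sp 0 (fst y) p +++ reversepath(sp 0 (fst y) p)) (snd y))" in exI)
    apply (force simp: mult_le_one path_defs joinpaths_def sp_def reversepath_def)
    done
qed

lemma hp_linv:
  fixes p :: "real \<Rightarrow> 'b::topological_space"
  assumes "path p" "path_image p \<subseteq> S"
  shows "homotopic_paths S (reversepath p +++ p) (\<lambda>_. pathfinish p)"
  using hp_rinv [of "reversepath p" S] assms by simp

lemma hp_join_sps:
  fixes g :: "real \<Rightarrow> 'b::topological_space"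
  assumes "path g" and pag: "path_image g \<subseteq> S"
      and u: "u \<in> {0..1}" and v: "v \<in> {0..1}" and w: "w \<in> {0..1}" "u \<le> v" "v \<le> w" "u < w"
    shows "homotopic_paths S (sp u v g +++ sp v w g) (sp u w g)"
proof -
  have 1: "t * 2 \<le> 1 \<Longrightarrow> u + t * (v * 2) \<le> v + t * (u * 2)" for t
    using affine_ineq \<open>u \<le> v\<close> by fastforce
  have 2: "t * 2 > 1 \<Longrightarrow> u + (2*t - 1) * v \<le> v + (2*t - 1) * w" for t
    by (metis add_mono_thms_linordered_semiring(1) diff_gt_0_iff_gt less_eq_real_def mult.commute mult_right_mono \<open>u \<le> v\<close> \<open>v \<le> w\<close>)
  have t2: "\<And>t::real. t*2 = 1 \<Longrightarrow> t = 1/2" by auto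
  have False: "w \<noteq> u" using \<open>u < w\<close> by simp
  have "homotopic_paths (path_image g) (sp u v g +++ sp v w g) (sp u w g)"
  proof -
    let ?f = "\<lambda>t. if  t \<le> 1/2 then inverse((w - u)) *\<^sub>R (2 * (v - u)) *\<^sub>R t
                               else inverse((w - u)) *\<^sub>R ((v - u) + (w - v) *\<^sub>R (2 *\<^sub>R t - 1))"
    show ?thesis
    proof (rule homotopic_paths_sym [OF homotopic_paths_reparametrize [where f = ?f]])
      show "path (sp u w g)"
        using assms(1) path_sp u w(1) by blast
      show "path_image (sp u w g) \<subseteq> path_image g"
        by (meson path_image_sp u w(1))
      show "continuous_on {0..1} ?f"
        unfolding split_01
        by (rule continuous_on_cases continuous_intros | force simp: pathfinish_def joinpaths_def dest!: t2)+
      show "?f \<in> {0..1} \<rightarrow> {0..1}"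
        using False assms
        by (force simp: field_simps not_le mult_left_mono affine_ineq dest!: 1 2)
      show "(sp u v g +++ sp v w g) t = sp u w g (?f t)" if "t \<in> {0..1}" for t 
        using assms
        unfolding joinpaths_def sp_def by (auto simp: divide_simps add.commute mult.commute mult.left_commute)
    qed (use False in auto)
  qed
  then show ?thesis
    by (rule homotopic_paths_subset [OF _ pag])
qed


section \<open>Simplices, segments, linear homotopies\<close>

definition dl :: "'a \<Rightarrow> 'a \<Rightarrow> real" where "dl v = (\<lambda>x. if x = v then 1 else 0)"
definition cmb :: "real \<Rightarrow> ('a \<Rightarrow> real) \<Rightarrow> ('a \<Rightarrow> real) \<Rightarrow> 'a \<Rightarrow> real"
  where "cmb t f g = (\<lambda>x. (1 - t) * f x + t * g x)"
definition sg :: "('a \<Rightarrow> real) \<Rightarrow> ('a \<Rightarrow> real) \<Rightarrow> real \<Rightarrow> 'a \<Rightarrow> real"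
  where "sg f g = (\<lambda>t. cmb t f g)"
definition okD :: "'a::order set \<Rightarrow> 'a set \<Rightarrow> bool"
  where "okD G D \<longleftrightarrow> finite D \<and> D \<noteq> {} \<and> is_chain D \<and> D \<subseteq> G"
definition YG :: "'a::order set \<Rightarrow> ('a \<Rightarrow> real) set"
  where "YG G = (\<Union>D\<in>{D. okD G D}. geom_simplex D)"

lemma gs_cmb:
  assumes "f \<in> geom_simplex D" "g \<in> geom_simplex D" "t \<in> {0..1}"
  shows "cmb t f g \<in> geom_simplex D"
proof -
  have "sum (\<lambda>x. (1 - t) * f x + t * g x) D = (1 - t) * sum f D + t * sum g D"
    by (simp add: sum.distrib sum_distrib_left)
  then show ?thesis using assms
    by (auto simp: geom_simplex_def cmb_def)
qed

lemma dl_in: "finite D \<Longrightarrow> v \<in> D \<Longrightarrow> dl v \<in> geom_simplex D"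
  by (auto simp: geom_simplex_def dl_def)

lemma gs_pos: "f \<in> geom_simplex D \<Longrightarrow> f x > 0 \<Longrightarrow> x \<in> D"
  by (auto simp: geom_simplex_def)

lemma gs_ex_pos: assumes "f \<in> geom_simplex D" shows "\<exists>x\<in>D. f x > 0"
proof (rule ccontr)
  assume "\<not> ?thesis"
  moreover have "\<forall>x. 0 \<le> f x" using assms by (simp add: geom_simplex_def)
  ultimately have "\<forall>x\<in>D. f x = 0" by (metis not_less order_antisym)
  then have "sum f D = 0" by simp
  then show False using assms by (simp add: geom_simplex_def)
qed

lemma cmb_0 [simp]: "cmb 0 f g = f" and cmb_1 [simp]: "cmb 1 f g = g"
  by (auto simp: cmb_def)

lemma cmb_same [simp]: "cmb t f f = f"
  by (auto simp: cmb_def fun_eq_iff algebra_simps)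

lemma cont_cmb:
  fixes g h :: "'c::topological_space \<Rightarrow> 'a \<Rightarrow> real"
  assumes "continuous_on S a" "continuous_on S g" "continuous_on S h"
  shows "continuous_on S (\<lambda>y. cmb (a y) (g y) (h y))"
  unfolding cmb_def
proof (rule continuous_on_coordinatewise_then_product)
  fix i
  have "continuous_on S (\<lambda>y. g y i)" "continuous_on S (\<lambda>y. h y i)"
    using assms by (auto intro: continuous_on_product_then_coordinatewise)
  then show "continuous_on S (\<lambda>y. (1 - a y) * g y i + a y * h y i)"
    using assms(1) by (intro continuous_intros)
qed

lemma path_sg [simp]: "path (sg f g)"
  unfolding path_def sg_def
  by (rule cont_cmb) (auto intro: continuous_intros)

lemma sg_start [simp]: "pathstart (sg f g) = f" and sg_finish [simp]: "pathfinish (sg f g) = g"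
  by (auto simp: sg_def pathstart_def pathfinish_def)

lemma rev_sg [simp]: "reversepath (sg f g) = sg g f"
  by (auto simp: sg_def reversepath_def cmb_def fun_eq_iff algebra_simps)

lemma sg_image:
  assumes "f \<in> geom_simplex D" "g \<in> geom_simplex D"
  shows "path_image (sg f g) \<subseteq> geom_simplex D"
  using gs_cmb[OF assms] by (auto simp: path_image_def sg_def)

lemma YG_mono: "G \<subseteq> H \<Longrightarrow> YG G \<subseteq> YG H"
  unfolding YG_def okD_def by blast

lemma YGI: "okD G D \<Longrightarrow> f \<in> geom_simplex D \<Longrightarrow> f \<in> YG G"
  by (auto simp: YG_def)

lemma YG_carrier: "YG G \<subseteq> realization_carrier"
  by (auto simp: YG_def okD_def realization_carrier_def order_simplices_def)

lemma lin_hom: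
  fixes g h :: "real \<Rightarrow> 'a::order \<Rightarrow> real"
  assumes "path g" "path h" "g 0 = h 0" "g 1 = h 1"
    and "\<And>t. t \<in> {0..1} \<Longrightarrow> \<exists>D. okD G D \<and> g t \<in> geom_simplex D \<and> h t \<in> geom_simplex D"
  shows "homotopic_paths (YG G) g h"
  unfolding homotopic_paths
proof (intro exI conjI)
  let ?k = "\<lambda>y. cmb (fst y) (g (snd y)) (h (snd y))"
  show "continuous_on ({0..1} \<times> {0..1}) ?k"
  proof (rule cont_cmb)
    show "continuous_on ({0..1} \<times> {0..1}) (\<lambda>y. g (snd y))"
      using assms(1) unfolding path_def
      by (rule continuous_on_compose2) (auto intro: continuous_intros)
    show "continuous_on ({0..1} \<times> {0..1}) (\<lambda>y. h (snd y))"
      using assms(2) unfolding path_def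
      by (rule continuous_on_compose2) (auto intro: continuous_intros)
  qed (auto intro: continuous_intros)
  show "?k \<in> {0..1} \<times> {0..1} \<rightarrow> YG G"
  proof
    fix y assume y: "y \<in> ({0..1::real} \<times> {0..1::real})"
    then obtain D where "okD G D" "g (snd y) \<in> geom_simplex D" "h (snd y) \<in> geom_simplex D"
      using assms(5) by force
    then show "?k y \<in> YG G" using y by (intro YGI[of G D] gs_cmb) auto
  qed
qed (use assms in \<open>auto simp: pathstart_def pathfinish_def\<close>)


section \<open>Topology of the realization\<close>

abbreviation RX :: "('a::order \<Rightarrow> real) topology" where "RX \<equiv> order_complex_realization TYPE('a)"

lemma openin_RX: "openin RX = realization_open"
  unfolding order_complex_realization_def
  by (rule topology_inverse'[OF istopology_realization_open])

lemma carrier_open: "realization_open (realization_carrier :: ('a::order \<Rightarrow> real) set)"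
  unfolding realization_open_def
proof (intro conjI ballI)
  fix C :: "'a set" assume "C \<in> order_simplices"
  then have "realization_carrier \<inter> geom_simplex C = geom_simplex C"
    by (auto simp: realization_carrier_def)
  then show "openin (top_of_set (geom_simplex C)) (realization_carrier \<inter> geom_simplex C)"
    by simp
qed simp

lemma topspace_RX: "topspace RX = realization_carrier"
  using carrier_open unfolding topspace_def openin_RX realization_open_def by blast

lemma cont_RX_eu: "continuous_map RX euclidean (\<lambda>f. f)"
  unfolding continuous_map_def
proof (intro conjI allI impI)
  show "(\<lambda>f. f) \<in> topspace RX \<rightarrow> topspace euclidean" by simp
  fix U :: "('a \<Rightarrow> real) set" assume "openin euclidean U"
  then have oU: "open U" by simp
  show "openin RX {x \<in> topspace RX. x \<in> U}"
    unfolding openin_RX topspace_RX realization_open_def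
  proof (intro conjI ballI)
    fix C :: "'a set" assume C: "C \<in> order_simplices"
    have "{x \<in> realization_carrier. x \<in> U} \<inter> geom_simplex C = geom_simplex C \<inter> U"
      using C by (auto simp: realization_carrier_def)
    then show "openin (top_of_set (geom_simplex C)) ({x \<in> realization_carrier. x \<in> U} \<inter> geom_simplex C)"
      using oU by (simp add: openin_open_Int)
  qed auto
qed

lemma pathin_RX_path:
  assumes "pathin RX p"
  shows "path p" "p ` {0..1} \<subseteq> realization_carrier"
proof -
  have cm: "continuous_map (top_of_set {0..1}) RX p" using assms by (simp add: pathin_def)
  have "continuous_map (top_of_set {0..1}) euclidean ((\<lambda>f. f) \<circ> p)"
    by (rule continuous_map_compose[OF cm cont_RX_eu])
  then show "path p" by (simp add: path_def o_def)
  show "p ` {0..1} \<subseteq> realization_carrier"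
    using continuous_map_image_subset_topspace[OF cm] topspace_RX by auto
qed

lemma closed_gs: "finite D \<Longrightarrow> closed (geom_simplex (D::'a set))"
proof -
  assume fD: "finite D"
  have e: "geom_simplex D = (\<Inter>x. {f::'a\<Rightarrow>real. 0 \<le> f x}) \<inter> (\<Inter>x\<in>-D. {f. f x = 0}) \<inter> {f. (\<Sum>i\<in>D. f i) = 1}"
    by (auto simp: geom_simplex_def)
  have c1: "closed {f::'a\<Rightarrow>real. 0 \<le> f x}" for x
    by (rule closed_Collect_le) (auto intro: continuous_intros)
  have c2: "closed {f::'a\<Rightarrow>real. f x = 0}" for x
    by (rule closed_Collect_eq) (auto intro: continuous_intros)
  have c3: "closed {f::'a\<Rightarrow>real. (\<Sum>i\<in>D. f i) = 1}"
    by (rule closed_Collect_eq) (auto intro!: continuous_intros continuous_on_sum)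
  show ?thesis unfolding e using c1 c2 c3 by (intro closed_Int closed_INT) auto
qed

lemma closed_finite_fun: "finite (S::('a \<Rightarrow> real) set) \<Longrightarrow> closed S"
proof -
  assume fS: "finite S"
  have "closed {f}" for f :: "'a \<Rightarrow> real"
  proof -
    have "{f} = (\<Inter>x. {g::'a\<Rightarrow>real. g x = f x})" by (auto simp: fun_eq_iff)
    moreover have "closed {g::'a\<Rightarrow>real. g x = f x}" for x
      by (rule closed_Collect_eq) (auto intro: continuous_intros)
    ultimately show ?thesis by auto
  qed
  moreover have "S = (\<Union>f\<in>S. {f})" by auto
  ultimately show ?thesis using fS by (metis closed_UN)
qed

lemma closedin_RX_simplex:
  assumes "closedin RX C" "D \<in> order_simplices"
  shows "closed (C \<inter> geom_simplex D)"
proof -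
  from assms(1) have CC: "C \<subseteq> realization_carrier" "realization_open (realization_carrier - C)"
    by (auto simp: closedin_def topspace_RX openin_RX)
  then have "\<forall>D\<in>order_simplices. openin (top_of_set (geom_simplex D)) ((realization_carrier - C) \<inter> geom_simplex D)"
    unfolding realization_open_def by simp
  then have o: "openin (top_of_set (geom_simplex D)) ((realization_carrier - C) \<inter> geom_simplex D)"
    using assms(2) by simp
  have sub: "geom_simplex D \<subseteq> realization_carrier"
    using assms(2) unfolding realization_carrier_def by blast
  have e: "(realization_carrier - C) \<inter> geom_simplex D = geom_simplex D - (C \<inter> geom_simplex D)"
    using sub by blast
  have "closedin (top_of_set (geom_simplex D)) (C \<inter> geom_simplex D)"
    unfolding closedin_def using o e by simp
  moreover have "closed (geom_simplex D)"
    using assms(2) by (auto intro: closed_gs simp: order_simplices_def)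
  ultimately show ?thesis by (rule closedin_closed_trans)
qed

lemma finite_okD: "finite G \<Longrightarrow> finite {D. okD G D}"
  by (rule finite_subset[of _ "Pow G"]) (auto simp: okD_def)

lemma YG_closed_part:
  assumes "closedin RX C" "finite G"
  shows "closed (C \<inter> YG G)"
proof -
  have "C \<inter> YG G = (\<Union>D\<in>{D. okD G D}. C \<inter> geom_simplex D)" unfolding YG_def by blast
  moreover have "\<forall>D\<in>{D. okD G D}. closed (C \<inter> geom_simplex D)"
  proof
    fix D assume "D \<in> {D. okD G D}"
    then have "D \<in> order_simplices" by (simp add: okD_def order_simplices_def)
    then show "closed (C \<inter> geom_simplex D)" using assms(1) closedin_RX_simplex by blast
  qed
  ultimately show ?thesis using finite_okD[OF assms(2)] by (metis closed_UN)
qed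

lemma cont_YG_RX:
  fixes G :: "'a::order set"
  assumes "continuous_map Z (top_of_set (YG G)) h" "finite G"
  shows "continuous_map Z (RX::('a \<Rightarrow> real) topology) h"
  unfolding continuous_map_closedin
proof (intro conjI allI impI)
  have im: "h ` topspace Z \<subseteq> YG G"
    using continuous_map_image_subset_topspace[OF assms(1)] by simp
  then have "h ` topspace Z \<subseteq> topspace (RX::('a \<Rightarrow> real) topology)" using YG_carrier[of G] topspace_RX by (metis subset_trans)
  then show "h \<in> topspace Z \<rightarrow> topspace RX" by (simp add: image_subset_iff_funcset)
  fix C :: "('a \<Rightarrow> real) set" assume "closedin RX C"
  then have "closed (C \<inter> YG G)" by (rule YG_closed_part[OF _ assms(2)])
  then have "closedin (top_of_set (YG G)) (YG G \<inter> (C \<inter> YG G))"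
    by (rule closedin_closed_Int)
  then have "closedin (top_of_set (YG G)) (C \<inter> YG G)" by (simp add: Int_absorb1)
  moreover have "\<forall>C. closedin (top_of_set (YG G)) C \<longrightarrow> closedin Z {x \<in> topspace Z. h x \<in> C}"
    using assms(1) unfolding continuous_map_closedin by simp
  ultimately have "closedin Z {x \<in> topspace Z. h x \<in> C \<inter> YG G}" by blast
  moreover have "{x \<in> topspace Z. h x \<in> C \<inter> YG G} = {x \<in> topspace Z. h x \<in> C}"
    using im by auto
  ultimately show "closedin Z {x \<in> topspace Z. h x \<in> C}" by simp
qed

lemma compact_discrete_finite:
  assumes "compactin X D" "\<And>E. E \<subseteq> D \<Longrightarrow> closedin X E"
  shows "finite D"
proof -
  let ?O = "\<lambda>d. topspace X - (D - {d})"
  have "\<forall>B\<in>?O ` D. openin X B" using assms(2) by (auto intro: openin_diff)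
  moreover have "D \<subseteq> \<Union>(?O ` D)" using compactin_subset_topspace[OF assms(1)] by auto
  ultimately obtain F where F: "finite F" "F \<subseteq> ?O ` D" "D \<subseteq> \<Union>F"
    using assms(1) unfolding compactin_def by meson
  then obtain D0 where D0: "D0 \<subseteq> D" "finite D0" "F = ?O ` D0" by (meson finite_subset_image)
  have "D \<subseteq> D0"
  proof
    fix x assume "x \<in> D"
    then obtain B where "B \<in> F" "x \<in> B" using F(3) by blast
    then obtain d where "d \<in> D0" "B = ?O d" using D0(3) by blast
    then show "x \<in> D0" using \<open>x \<in> B\<close> \<open>x \<in> D\<close> by auto
  qed
  then show ?thesis using D0(2) finite_subset by auto
qed

lemma carrier_gs: "f \<in> realization_carrier \<Longrightarrow> \<exists>C. C \<in> order_simplices \<and> f \<in> geom_simplex C"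
  by (auto simp: realization_carrier_def)

lemma pathin_finite_support:
  assumes "pathin RX (p :: real \<Rightarrow> 'a::order \<Rightarrow> real)"
  shows "\<exists>F. finite F \<and> p ` {0..1} \<subseteq> YG F"
proof -
  have cm: "continuous_map (top_of_set {0..1}) RX p" using assms by (simp add: pathin_def)
  have pin: "p s \<in> realization_carrier" if "s \<in> {0..1}" for s
    using pathin_RX_path(2)[OF assms] that by auto
  define S where "S = {x. \<exists>s\<in>{0..1}. p s x > 0}"
  define d where "d x = p (SOME s. s \<in> {0..1} \<and> p s x > 0)" for x
  have d: "d x \<in> p ` {0..1} \<and> d x x > 0" if "x \<in> S" for x
  proof -
    have "\<exists>s. s \<in> {0..1} \<and> p s x > 0" using that by (auto simp: S_def)
    from someI_ex[OF this] show ?thesis by (auto simp: d_def)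
  qed
  have K: "compactin RX (p ` {0..1})"
    by (rule image_compactin[OF _ cm]) (simp add: compactin_subtopology)
  have dp: "d ` S \<subseteq> p ` {0..1}"
  proof (rule image_subsetI)
    fix x assume "x \<in> S" then show "d x \<in> p ` {0..1}" using d by simp
  qed
  have pc: "p ` {0..1} \<subseteq> realization_carrier" using pin by (rule image_subsetI)
  have dS: "d ` S \<subseteq> realization_carrier" using dp pc by (rule subset_trans)
  have cl: "closedin RX E" if E: "E \<subseteq> d ` S" for E
  proof -
    have Ec: "E \<subseteq> realization_carrier" using E dS by (rule subset_trans)
    have "realization_open (realization_carrier - E)"
      unfolding realization_open_def
    proof (intro conjI ballI)
      fix C :: "'a set" assume C: "C \<in> order_simplices"
      have "E \<inter> geom_simplex C \<subseteq> d ` (S \<inter> C)"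
      proof
        fix y assume y: "y \<in> E \<inter> geom_simplex C"
        then have "y \<in> d ` S" using E by blast
        then obtain x where x: "x \<in> S" "y = d x" by (rule imageE)
        have "d x x > 0" using d[OF x(1)] by simp
        then have "y x > 0" using x(2) by simp
        then have "x \<in> C" using y by (intro gs_pos[of y C x]) auto
        then show "y \<in> d ` (S \<inter> C)" using x by (intro image_eqI[of _ d x]) auto
      qed
      moreover have "finite (d ` (S \<inter> C))" using C by (simp add: order_simplices_def)
      ultimately have "finite (E \<inter> geom_simplex C)" by (rule finite_subset)
      then have "closed (E \<inter> geom_simplex C)" by (rule closed_finite_fun)
      then have "openin (top_of_set (geom_simplex C)) (geom_simplex C \<inter> - (E \<inter> geom_simplex C))"
        by (intro openin_open_Int open_Compl)
      moreover have sub: "geom_simplex C \<subseteq> realization_carrier"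
        using C unfolding realization_carrier_def by blast
      then have "geom_simplex C \<inter> - (E \<inter> geom_simplex C) = (realization_carrier - E) \<inter> geom_simplex C"
        by blast
      ultimately show "openin (top_of_set (geom_simplex C)) ((realization_carrier - E) \<inter> geom_simplex C)"
        by simp
    qed simp
    then show ?thesis using Ec by (simp add: closedin_def topspace_RX openin_RX)
  qed
  from dp have "compactin RX (d ` S)"
    by (rule closed_compactin[OF K _ cl[OF order_refl]])
  then have fd: "finite (d ` S)" by (rule compact_discrete_finite[OF _ cl])
  have fy: "finite {x. y x > 0}" if "y \<in> d ` S" for y
  proof -
    have "y \<in> realization_carrier" using that dS by (rule subsetD[rotated])
    then obtain C where "C \<in> order_simplices" "y \<in> geom_simplex C" using carrier_gs by blast
    moreover have "{x. y x > 0} \<subseteq> C" using gs_pos[OF \<open>y \<in> geom_simplex C\<close>] by blast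
    ultimately show ?thesis using finite_subset by (auto simp: order_simplices_def)
  qed
  have "S \<subseteq> (\<Union>y\<in>d ` S. {x. y x > 0})"
  proof
    fix x assume x: "x \<in> S"
    then have "d x x > 0" using d by simp
    then show "x \<in> (\<Union>y\<in>d ` S. {x. y x > 0})" using x by (intro UN_I[of "d x"]) auto
  qed
  moreover have "finite (\<Union>y\<in>d ` S. {x. y x > 0})" using fd fy by (rule finite_UN_I)
  ultimately have fS: "finite S" by (rule finite_subset)
  have "p s \<in> YG S" if s: "s \<in> {0..1}" for s
  proof -
    obtain C where C: "C \<in> order_simplices" "p s \<in> geom_simplex C" using carrier_gs pin[OF s] by blast
    have nn: "\<forall>x. 0 \<le> p s x" using C(2) by (simp add: geom_simplex_def)
    have z: "p s x = 0" if "x \<notin> C \<inter> S" for x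
    proof (cases "x \<in> C")
      case True
      then have "\<not> p s x > 0" using that s by (auto simp: S_def)
      then show ?thesis using nn by (meson antisym not_le)
    next
      case False then show ?thesis using C(2) by (simp add: geom_simplex_def)
    qed
    have fC: "finite C" using C(1) by (simp add: order_simplices_def)
    have "sum (p s) (C \<inter> S) = sum (p s) C"
      by (rule sum.mono_neutral_left) (use fC z in auto)
    then have g: "p s \<in> geom_simplex (C \<inter> S)"
      using C(2) nn z by (auto simp: geom_simplex_def)
    have "C \<inter> S \<noteq> {}" using gs_ex_pos[OF g] by auto
    then have "okD S (C \<inter> S)" using C(1) fC by (auto simp: okD_def order_simplices_def is_chain_def)
    then show ?thesis using g by (rule YGI)
  qed
  then show ?thesis using fS by blast
qed


section \<open>Vertex paths\<close>

definition cmp :: "'a::order \<Rightarrow> 'a \<Rightarrow> bool" where "cmp x y \<longleftrightarrow> x \<le> y \<or> y \<le> x"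

definition e :: "'a \<Rightarrow> 'a \<Rightarrow> real \<Rightarrow> 'a \<Rightarrow> real" where "e u v = sg (dl u) (dl v)"

fun vp :: "'a list \<Rightarrow> real \<Rightarrow> 'a \<Rightarrow> real" where
  "vp [] = (\<lambda>_. (\<lambda>_. 0))"
| "vp [x] = (\<lambda>_. dl x)"
| "vp (x # y # ys) = e x y +++ vp (y # ys)"

definition okl :: "'a::order set \<Rightarrow> 'a list \<Rightarrow> bool"
  where "okl G xs \<longleftrightarrow> xs \<noteq> [] \<and> set xs \<subseteq> G \<and> successively cmp xs"

definition hpl :: "'a::order set \<Rightarrow> 'a list \<Rightarrow> 'a list \<Rightarrow> bool"
  where "hpl G xs ys \<longleftrightarrow> homotopic_paths (YG G) (vp xs) (vp ys)"

lemma cmp_refl [simp]: "cmp x x" by (simp add: cmp_def)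
lemma cmp_sym: "cmp x y \<Longrightarrow> cmp y x" by (auto simp: cmp_def)

lemma e_start [simp]: "pathstart (e u v) = dl u" and e_finish [simp]: "pathfinish (e u v) = dl v"
  by (auto simp: e_def)
lemma path_e [simp]: "path (e u v)" by (simp add: e_def)

lemma okD_pair: "cmp u v \<Longrightarrow> u \<in> G \<Longrightarrow> v \<in> G \<Longrightarrow> okD G {u, v}"
  by (auto simp: okD_def is_chain_def cmp_def)

lemma okD_triple: "cmp x y \<Longrightarrow> cmp y z \<Longrightarrow> cmp x z \<Longrightarrow> x \<in> G \<Longrightarrow> y \<in> G \<Longrightarrow> z \<in> G \<Longrightarrow> okD G {x, y, z}"
  by (auto simp: okD_def is_chain_def cmp_def)

lemma e_image_gs: "u \<in> D \<Longrightarrow> v \<in> D \<Longrightarrow> finite D \<Longrightarrow> path_image (e u v) \<subseteq> geom_simplex D"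
  unfolding e_def by (intro sg_image dl_in) auto

lemma e_image: "cmp u v \<Longrightarrow> u \<in> G \<Longrightarrow> v \<in> G \<Longrightarrow> path_image (e u v) \<subseteq> YG G"
proof -
  assume a: "cmp u v" "u \<in> G" "v \<in> G"
  have "path_image (e u v) \<subseteq> geom_simplex {u, v}" by (rule e_image_gs) auto
  moreover have "geom_simplex {u, v} \<subseteq> YG G" using okD_pair[OF a] YGI by blast
  ultimately show ?thesis by (rule subset_trans)
qed

lemma dl_YG: "v \<in> G \<Longrightarrow> dl v \<in> YG G"
  by (rule YGI[of G "{v}"]) (auto simp: okD_def is_chain_def intro: dl_in)

lemma pathstart_const [simp]: "pathstart (\<lambda>_. c) = c" by (simp add: pathstart_def)
lemma pathfinish_const [simp]: "pathfinish (\<lambda>_. c) = c" by (simp add: pathfinish_def)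

lemma vp_start: "xs \<noteq> [] \<Longrightarrow> pathstart (vp xs) = dl (hd xs)"
  by (induction xs rule: vp.induct) auto

lemma vp_finish: "xs \<noteq> [] \<Longrightarrow> pathfinish (vp xs) = dl (last xs)"
  by (induction xs rule: vp.induct) auto

lemma vp_cons: "L \<noteq> [] \<Longrightarrow> vp (a # L) = e a (hd L) +++ vp L"
  by (cases L) auto

lemma okl_cons: "L \<noteq> [] \<Longrightarrow> okl G (a # L) \<longleftrightarrow> a \<in> G \<and> cmp a (hd L) \<and> okl G L"
  by (cases L) (auto simp: okl_def)

lemma vp_ok: "okl G xs \<Longrightarrow> path (vp xs) \<and> path_image (vp xs) \<subseteq> YG G"
proof (induction xs rule: vp.induct)
  case 1 then show ?case by (simp add: okl_def)
next
  case (2 x) then show ?case by (auto simp: okl_def cpath_image dl_YG)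
next
  case (3 x y ys)
  then have ih: "path (vp (y # ys)) \<and> path_image (vp (y # ys)) \<subseteq> YG G"
    using okl_cons[of "y # ys" G x] by simp
  have ok: "cmp x y" "x \<in> G" "y \<in> G" using "3.prems" by (auto simp: okl_def)
  have f: "pathfinish (e x y) = pathstart (vp (y # ys))" by (simp add: vp_start)
  have "path (e x y +++ vp (y # ys))" using ih f by simp
  moreover have "path_image (e x y +++ vp (y # ys)) \<subseteq> YG G"
    by (rule subset_path_image_join[OF e_image[OF ok]]) (use ih in simp)
  ultimately show ?case by simp
qed

lemma hpl_refl: "okl G xs \<Longrightarrow> hpl G xs xs"
  using vp_ok by (simp add: hpl_def)
lemma hpl_sym: "hpl G xs ys \<Longrightarrow> hpl G ys xs"
  by (simp add: hpl_def homotopic_paths_sym)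
lemma hpl_trans: "hpl G xs ys \<Longrightarrow> hpl G ys zs \<Longrightarrow> hpl G xs zs"
  unfolding hpl_def by (rule homotopic_paths_trans)

lemma lin_hom2:
  fixes g h :: "real \<Rightarrow> 'a::order \<Rightarrow> real"
  assumes "path g" "path h" "pathstart g = pathstart h" "pathfinish g = pathfinish h"
    and "okD G D" "path_image g \<subseteq> geom_simplex D" "path_image h \<subseteq> geom_simplex D"
  shows "homotopic_paths (YG G) g h"
proof (rule lin_hom)
  fix t :: real assume "t \<in> {0..1}"
  then show "\<exists>D. okD G D \<and> g t \<in> geom_simplex D \<and> h t \<in> geom_simplex D"
    using assms(5-7) by (intro exI[of _ D]) (auto simp: path_image_def)
qed (use assms in \<open>auto simp: pathstart_def pathfinish_def\<close>)

lemma tri_base: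
  assumes "cmp x y" "cmp y z" "cmp x z" "x \<in> G" "y \<in> G" "z \<in> G"
  shows "homotopic_paths (YG G) (e x y +++ e y z) (e x z)"
proof (rule lin_hom2)
  show "okD G {x, y, z}" using okD_triple assms by blast
  show "path_image (e x y +++ e y z) \<subseteq> geom_simplex {x, y, z}"
    by (intro subset_path_image_join e_image_gs) auto
  show "path_image (e x z) \<subseteq> geom_simplex {x, y, z}"
    by (intro e_image_gs) auto
qed auto

lemma tri_del0:
  assumes "okl G (x # y # z # ys)" "cmp x z"
  shows "hpl G (x # y # z # ys) (x # z # ys)"
proof -
  have ok: "cmp x y" "cmp y z" "x \<in> G" "y \<in> G" "z \<in> G" "okl G (z # ys)"
    using assms(1) by (auto simp: okl_def)
  have p: "path (vp (z # ys))" "path_image (vp (z # ys)) \<subseteq> YG G" using vp_ok[OF ok(6)] by auto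
  have s: "pathstart (vp (z # ys)) = dl z" by (simp add: vp_start)
  have exy: "path_image (e x y) \<subseteq> YG G" by (rule e_image) (use ok in auto)
  have eyz: "path_image (e y z) \<subseteq> YG G" by (rule e_image) (use ok in auto)
  have "homotopic_paths (YG G) (e x y +++ (e y z +++ vp (z # ys))) ((e x y +++ e y z) +++ vp (z # ys))"
    using p s exy eyz by (intro homotopic_paths_assoc) auto
  also have "homotopic_paths (YG G) \<dots> (e x z +++ vp (z # ys))"
    using p s ok assms(2) by (intro homotopic_paths_join tri_base) auto
  finally show ?thesis by (simp add: hpl_def)
qed

lemma tri_del_gen:
  assumes "okl G (xs @ x # y # z # ys)" "cmp x z"
  shows "hpl G (xs @ x # y # z # ys) (xs @ x # z # ys)"
  using assms
proof (induction xs)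
  case Nil then show ?case using tri_del0 by simp
next
  case (Cons a xs)
  let ?L = "xs @ x # y # z # ys" and ?R = "xs @ x # z # ys"
  have ne: "?L \<noteq> []" "?R \<noteq> []" by auto
  have hd: "hd ?L = hd ?R" by (cases xs) auto
  have okL: "okl G ?L" and a: "a \<in> G" "cmp a (hd ?L)"
    using Cons.prems(1) okl_cons[OF ne(1)] by auto
  have ih: "hpl G ?L ?R" using Cons.IH okL Cons.prems(2) by simp
  have "homotopic_paths (YG G) (e a (hd ?L) +++ vp ?L) (e a (hd ?R) +++ vp ?R)"
    unfolding hd
  proof (rule homotopic_paths_join)
    have hG: "hd ?R \<in> G" using okL ne(1) hd by (metis hd_in_set okl_def subsetD)
    have "path_image (e a (hd ?R)) \<subseteq> YG G" using e_image[OF _ a(1) hG] a(2) hd by simp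
    then show "homotopic_paths (YG G) (e a (hd ?R)) (e a (hd ?R))" by simp
    show "homotopic_paths (YG G) (vp ?L) (vp ?R)" using ih by (simp add: hpl_def)
  qed (simp add: vp_start ne hd)
  then show ?case using ne by (simp add: hpl_def vp_cons)
qed

lemma tri_del:
  assumes "L = xs @ x # y # z # ys" "R = xs @ x # z # ys" "okl G L" "cmp x z"
  shows "hpl G L R"
  using tri_del_gen assms by blast

lemma tri_ins:
  assumes "L = xs @ x # y # z # ys" "R = xs @ x # z # ys" "okl G L" "cmp x z"
  shows "hpl G R L"
  using tri_del[OF assms] by (rule hpl_sym)

lemma app_vp:
  assumes "okl G (xs @ [y])" "okl G (y # zs)"
  shows "homotopic_paths (YG G) (vp (xs @ [y]) +++ vp (y # zs)) (vp (xs @ y # zs))"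
  using assms
proof (induction xs)
  case Nil
  have "homotopic_paths (YG G) ((\<lambda>_. pathstart (vp (y # zs))) +++ vp (y # zs)) (vp (y # zs))"
    using vp_ok[OF Nil.prems(2)] by (intro hp_lid) auto
  then show ?case by (simp add: vp_start)
next
  case (Cons a xs)
  let ?L = "xs @ [y]" and ?R = "xs @ y # zs"
  have ne: "?L \<noteq> []" "?R \<noteq> []" by auto
  have hd: "hd ?L = hd ?R" by (cases xs) auto
  have okL: "okl G ?L" and a: "a \<in> G" "cmp a (hd ?L)"
    using Cons.prems(1) okl_cons[OF ne(1)] by auto
  have ih: "homotopic_paths (YG G) (vp ?L +++ vp (y # zs)) (vp ?R)" using Cons.IH okL Cons.prems(2) by simp
  have hG: "hd ?L \<in> G" using okL ne(1) by (metis hd_in_set okl_def subsetD)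
  have eim: "path_image (e a (hd ?L)) \<subseteq> YG G" using e_image[OF a(2) a(1) hG] .
  have v1: "path (vp ?L)" "path_image (vp ?L) \<subseteq> YG G" using vp_ok[OF okL] by auto
  have v2: "path (vp (y # zs))" "path_image (vp (y # zs)) \<subseteq> YG G" using vp_ok[OF Cons.prems(2)] by auto
  have "homotopic_paths (YG G) ((e a (hd ?L) +++ vp ?L) +++ vp (y # zs)) (e a (hd ?L) +++ (vp ?L +++ vp (y # zs)))"
    using eim v1 v2 by (intro homotopic_paths_sym[OF homotopic_paths_assoc]) (auto simp: vp_start vp_finish)
  also have "homotopic_paths (YG G) \<dots> (e a (hd ?R) +++ vp ?R)"
    unfolding hd[symmetric]
    using eim ih by (intro homotopic_paths_join) (auto simp: vp_start ne)
  finally show ?case using ne by (simp add: vp_cons)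
qed


section \<open>Combinatorial moves\<close>

declare hpl_trans[trans]

lemma okl_Cons2: "okl G (x # y # L) \<longleftrightarrow> x \<in> G \<and> cmp x y \<and> okl G (y # L)"
  by (auto simp: okl_def)
lemma okl_hd: "okl G (y # L) \<Longrightarrow> y \<in> G"
  by (simp add: okl_def)
lemma okl_single: "okl G [x] \<longleftrightarrow> x \<in> G"
  by (simp add: okl_def)

lemma cmpI1: "x \<le> y \<Longrightarrow> cmp x y" and cmpI2: "y \<le> x \<Longrightarrow> cmp x y"
  by (auto simp: cmp_def)

lemma triangle:
  assumes ok: "okl G (a0 # mx # x # jxy # y # rest)" and G: "my \<in> G" "M \<in> G"
    and o: "a0 \<le> mx" "x \<le> mx" "a0 \<le> my" "y \<le> my" "x \<le> jxy" "y \<le> jxy" "mx \<le> M" "my \<le> M" "jxy \<le> M"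
  shows "hpl G (a0 # mx # x # jxy # y # rest) (a0 # my # y # rest)"
proof -
  have xM: "x \<le> M" "y \<le> M" "a0 \<le> M" using o order_trans by blast+
  have okd: "a0 \<in> G" "mx \<in> G" "x \<in> G" "jxy \<in> G" "y \<in> G" "okl G (y # rest)"
    using ok by (auto simp: okl_def)
  note c = cmpI1[OF o(1)] cmpI2[OF o(2)] cmpI1[OF o(5)] cmpI2[OF o(6)] cmpI1[OF o(7)]
    cmpI2[OF xM(1)] cmpI2[OF o(9)] cmpI1[OF xM(3)] cmpI2[OF xM(2)] cmpI2[OF o(8)] cmpI2[OF o(4)] cmpI1[OF o(3)]
    cmpI1[OF o(9)]
  have "hpl G (a0 # mx # x # jxy # y # rest) (a0 # mx # M # x # jxy # y # rest)"
    by (rule tri_ins[where xs="[a0]" and x=mx and y=M and z=x and ys="jxy # y # rest"])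
       (simp_all add: okl_Cons2 c okd G)
  also have "hpl G \<dots> (a0 # mx # M # jxy # y # rest)"
    by (rule tri_del[where xs="[a0, mx]" and x=M and y=x and z=jxy and ys="y # rest"])
       (simp_all add: okl_Cons2 c okd G)
  also have "hpl G \<dots> (a0 # M # jxy # y # rest)"
    by (rule tri_del[where xs="[]" and x=a0 and y=mx and z=M and ys="jxy # y # rest"])
       (simp_all add: okl_Cons2 c okd G)
  also have "hpl G \<dots> (a0 # M # y # rest)"
    by (rule tri_del[where xs="[a0]" and x=M and y=jxy and z=y and ys="rest"])
       (simp_all add: okl_Cons2 c okd G)
  also have "hpl G \<dots> (a0 # M # my # y # rest)"
    by (rule tri_ins[where xs="[a0]" and x=M and y=my and z=y and ys="rest"])
       (simp_all add: okl_Cons2 c okd G)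
  also have "hpl G \<dots> (a0 # my # y # rest)"
    by (rule tri_del[where xs="[]" and x=a0 and y=M and z=my and ys="y # rest"])
       (simp_all add: okl_Cons2 c okd G)
  finally show ?thesis .
qed

lemma step2:
  assumes ok: "okl G (pre @ a # jab # b # rest)" and G: "J \<in> G" "jac \<in> G" "c \<in> G" "jbc \<in> G"
    and o: "a \<le> jab" "b \<le> jab" "jab \<le> J" "a \<le> jac" "c \<le> jac" "jac \<le> J" "b \<le> jbc" "c \<le> jbc" "jbc \<le> J"
  shows "hpl G (pre @ a # jab # b # rest) (pre @ a # jac # c # jbc # b # rest)"
proof -
  have d: "a \<le> J" "b \<le> J" "c \<le> J" using o order_trans by blast+
  have okd: "okl G (pre @ [a])" "a \<in> G" "jab \<in> G" "b \<in> G" "okl G (b # rest)"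
    using ok by (auto simp: okl_def successively_append_iff)
  have okp: "okl G (pre @ a # L) \<longleftrightarrow> okl G (a # L)" for L
    using okd(1) by (auto simp: okl_def successively_append_iff)
  note c = cmpI1[OF o(1)] cmpI2[OF o(1)] cmpI1[OF o(2)] cmpI2[OF o(2)] cmpI1[OF o(3)] cmpI2[OF o(3)] cmpI1[OF o(4)] cmpI2[OF o(4)] cmpI1[OF o(5)] cmpI2[OF o(5)] cmpI1[OF o(6)] cmpI2[OF o(6)] cmpI1[OF o(7)] cmpI2[OF o(7)] cmpI1[OF o(8)] cmpI2[OF o(8)] cmpI1[OF o(9)] cmpI2[OF o(9)]
    cmpI1[OF d(1)] cmpI2[OF d(1)] cmpI1[OF d(2)] cmpI2[OF d(2)] cmpI1[OF d(3)] cmpI2[OF d(3)]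
  have "hpl G (pre @ a # jab # b # rest) (pre @ a # J # jab # b # rest)"
    by (rule tri_ins[where xs="pre" and x=a and y=J and z=jab and ys="b # rest"])
       (simp_all add: okp okl_Cons2 c okd G)
  also have "hpl G \<dots> (pre @ a # J # b # rest)"
    using tri_del[where xs="pre @ [a]" and x=J and y=jab and z=b and ys="rest"]
    by (simp add: okp okl_Cons2 c okd G)
  also have "hpl G \<dots> (pre @ a # jac # J # b # rest)"
    by (rule tri_ins[where xs="pre" and x=a and y=jac and z=J and ys="b # rest"])
       (simp_all add: okp okl_Cons2 c okd G)
  also have "hpl G \<dots> (pre @ a # jac # c # J # b # rest)"
    using tri_ins[where xs="pre @ [a]" and x=jac and y=c and z=J and ys="b # rest"]
    by (simp add: okp okl_Cons2 c okd G)
  also have "hpl G \<dots> (pre @ a # jac # c # J # jbc # b # rest)"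
    using tri_ins[where xs="pre @ [a, jac, c]" and x=J and y=jbc and z=b and ys="rest"]
    by (simp add: okp okl_Cons2 c okd G)
  also have "hpl G \<dots> (pre @ a # jac # c # jbc # b # rest)"
    using tri_del[where xs="pre @ [a, jac]" and x=c and y=J and z=jbc and ys="b # rest"]
    by (simp add: okp okl_Cons2 c okd G)
  finally show ?thesis .
qed


section \<open>Joins and the vertex lemma\<close>

definition jn :: "'a::order set \<Rightarrow> 'a" where "jn S = (THE j. is_join S j)"

lemma join_unique: "is_join S j \<Longrightarrow> is_join S j' \<Longrightarrow> j = j'"
  by (auto simp: is_join_def intro: order_antisym)

lemma jn_eq: "is_join S j \<Longrightarrow> jn S = j"
  unfolding jn_def using join_unique by blast

lemma ub_mono: "has_upper_bound T \<Longrightarrow> S \<subseteq> T \<Longrightarrow> has_upper_bound S"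
  by (auto simp: has_upper_bound_def)

locale PS =
  fixes a0 :: "'a::order"
  assumes atz: "atomized TYPE('a)"
    and ng: "\<forall>a1 a2::'a. is_atom a1 \<and> is_atom a2 \<longrightarrow> \<not> generates {a1, a2}"
    and a0: "is_atom a0"
    and cnd: "\<forall>a1 a2::'a. is_atom a1 \<and> is_atom a2 \<longrightarrow>
           (\<exists>a3. is_atom a3 \<and> has_upper_bound {a1, a2, a3} \<and>
                 has_upper_bound {a0, a1, a3} \<and> has_upper_bound {a0, a2, a3})"
begin

lemma jn_join:
  fixes S :: "'a set"
  assumes "finite S" "S \<noteq> {}" "\<forall>a\<in>S. is_atom a" "has_upper_bound S"
  shows "is_join S (jn S)"
proof -
  obtain j where j: "is_join S j" using atz assms unfolding atomized_def by blast
  then show ?thesis using jn_eq[OF j] by simp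
qed

lemma jn_ub:
  fixes S :: "'a set"
  assumes "finite S" "S \<noteq> {}" "\<forall>a\<in>S. is_atom a" "has_upper_bound S" "s \<in> S"
  shows "s \<le> jn S"
  using jn_join[OF assms(1-4)] assms(5) by (auto simp: is_join_def)

lemma jn_le:
  fixes S :: "'a set"
  assumes "finite S" "S \<noteq> {}" "\<forall>a\<in>S. is_atom a" "has_upper_bound S" "\<forall>s\<in>S. s \<le> u"
  shows "jn S \<le> u"
  using jn_join[OF assms(1-4)] assms(5) by (auto simp: is_join_def)

definition atm :: "'a \<Rightarrow> 'a" where "atm w = (SOME a. is_atom a \<and> a \<le> w)"

lemma atm_spec: "is_atom (atm w)" "atm w \<le> w"
proof -
  have "\<exists>a. is_atom a \<and> a \<le> w" using atz by (simp add: atomized_def)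
  from someI_ex[OF this] show "is_atom (atm w)" "atm w \<le> w" by (auto simp: atm_def)
qed

definition cc :: "'a \<Rightarrow> 'a \<Rightarrow> 'a" where
  "cc x y = (SOME c. is_atom c \<and> has_upper_bound {x, y, c} \<and> has_upper_bound {a0, x, c} \<and> has_upper_bound {a0, y, c})"

lemma cc:
  assumes "is_atom x" "is_atom y"
  shows "is_atom (cc x y)" "has_upper_bound {x, y, cc x y}" "has_upper_bound {a0, x, cc x y}"
    "has_upper_bound {a0, y, cc x y}"
proof -
  have "\<exists>c. is_atom c \<and> has_upper_bound {x, y, c} \<and> has_upper_bound {a0, x, c} \<and> has_upper_bound {a0, y, c}"
    using cnd assms by blast
  from someI_ex[OF this] show "is_atom (cc x y)" "has_upper_bound {x, y, cc x y}" "has_upper_bound {a0, x, cc x y}"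
    "has_upper_bound {a0, y, cc x y}" by (auto simp: cc_def)
qed

lemma pair_ub: "is_atom (x::'a) \<Longrightarrow> is_atom y \<Longrightarrow> has_upper_bound {x, y}"
proof -
  assume "is_atom x" "is_atom y"
  moreover have "\<forall>a1 a2::'a. is_atom a1 \<and> is_atom a2 \<longrightarrow> has_upper_bound {a1, a2}"
    using ng by (simp add: generates_def)
  ultimately show ?thesis by blast
qed

definition stdl :: "'a \<Rightarrow> 'a list" where "stdl w = [a0, jn {a0, atm w}, atm w, w]"

definition AtS :: "'a set \<Rightarrow> 'a set" where
  "AtS F = insert a0 (atm ` F \<union> (\<lambda>(x, y). cc x y) ` (atm ` F \<times> atm ` F))"

definition GF :: "'a set \<Rightarrow> 'a set" where
  "GF F = F \<union> AtS F \<union> jn ` {S. S \<subseteq> AtS F \<and> S \<noteq> {} \<and> has_upper_bound S}"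

lemma finite_AtS: "finite F \<Longrightarrow> finite (AtS F)"
  by (simp add: AtS_def)

lemma finite_GF: "finite F \<Longrightarrow> finite (GF F)"
  using finite_AtS by (simp add: GF_def)

lemma AtS_atoms: "x \<in> AtS F \<Longrightarrow> is_atom x"
  using a0 atm_spec cc by (auto simp: AtS_def)

lemma jn_GF: "S \<subseteq> AtS F \<Longrightarrow> S \<noteq> {} \<Longrightarrow> has_upper_bound S \<Longrightarrow> jn S \<in> GF F"
  by (auto simp: GF_def)

lemma AtS_GF: "AtS F \<subseteq> GF F" and F_GF: "F \<subseteq> GF F"
  by (auto simp: GF_def)

lemma vertex_lemma:
  assumes uv: "u \<in> F" "v \<in> F" "cmp u v"
  shows "hpl (GF F) (stdl u @ [v]) (stdl v)"
proof -
  define a where "a = atm u"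
  define b where "b = atm v"
  define c where "c = cc a b"
  have aA: "a \<in> AtS F" "b \<in> AtS F" "a0 \<in> AtS F" using uv by (auto simp: AtS_def a_def b_def)
  have "(a, b) \<in> atm ` F \<times> atm ` F" using uv by (auto simp: a_def b_def)
  then have "c \<in> (\<lambda>(x, y). cc x y) ` (atm ` F \<times> atm ` F)" unfolding c_def by force
  then have cA: "c \<in> AtS F" by (simp add: AtS_def)
  have ats: "is_atom a" "is_atom b" "is_atom c" "is_atom a0" using AtS_atoms aA cA by auto
  have au: "a \<le> u" "b \<le> v" using ats by (auto simp: a_def b_def atm_spec)
  have bd: "has_upper_bound {a, b, c}" "has_upper_bound {a0, a, c}" "has_upper_bound {a0, b, c}"
    using cc[OF ats(1,2)] by (auto simp: c_def)
  have bd2: "has_upper_bound {a0, a}" "has_upper_bound {a0, b}" "has_upper_bound {a0, c}"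
    "has_upper_bound {a, b}" "has_upper_bound {a, c}" "has_upper_bound {b, c}"
    using pair_ub ats by auto
  define ma where "ma = jn {a0, a}"
  define mb where "mb = jn {a0, b}"
  define mc where "mc = jn {a0, c}"
  define jab where "jab = jn {a, b}"
  define jac where "jac = jn {a, c}"
  define jbc where "jbc = jn {b, c}"
  define J where "J = jn {a, b, c}"
  define M1 where "M1 = jn {a0, a, c}"
  define M2 where "M2 = jn {a0, b, c}"
  have inG: "ma \<in> GF F" "mb \<in> GF F" "mc \<in> GF F" "jab \<in> GF F" "jac \<in> GF F" "jbc \<in> GF F"
    "J \<in> GF F" "M1 \<in> GF F" "M2 \<in> GF F"
    unfolding ma_def mb_def mc_def jab_def jac_def jbc_def J_def M1_def M2_def
    using aA cA bd bd2 by (auto intro!: jn_GF)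
  have inG2: "a \<in> GF F" "b \<in> GF F" "c \<in> GF F" "a0 \<in> GF F" "u \<in> GF F" "v \<in> GF F"
    using aA cA AtS_GF F_GF uv by auto
  note ub = jn_ub[of "{a0, a}"] jn_ub[of "{a0, b}"] jn_ub[of "{a0, c}"] jn_ub[of "{a, b}"]
    jn_ub[of "{a, c}"] jn_ub[of "{b, c}"] jn_ub[of "{a, b, c}"] jn_ub[of "{a0, a, c}"] jn_ub[of "{a0, b, c}"]
  have o1: "a0 \<le> ma" "a \<le> ma" "a0 \<le> mb" "b \<le> mb" "a0 \<le> mc" "c \<le> mc"
    "a \<le> jab" "b \<le> jab" "a \<le> jac" "c \<le> jac" "b \<le> jbc" "c \<le> jbc"
    "a \<le> J" "b \<le> J" "c \<le> J" "a0 \<le> M1" "a \<le> M1" "c \<le> M1" "a0 \<le> M2" "b \<le> M2" "c \<le> M2"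
    unfolding ma_def mb_def mc_def jab_def jac_def jbc_def J_def M1_def M2_def
    using ats bd bd2 by (auto intro!: jn_ub)
  have o2: "jab \<le> J" "jac \<le> J" "jbc \<le> J" "ma \<le> M1" "jac \<le> M1" "mc \<le> M1"
    "mc \<le> M2" "jbc \<le> M2" "mb \<le> M2"
    unfolding ma_def mb_def mc_def jab_def jac_def jbc_def
    using o1 ats bd bd2 by (auto intro!: jn_le)
  let ?G = "GF F"
  have s1: "hpl ?G [a0, ma, a, u, v] [a0, ma, a, jab, b, v]"
  proof (cases "u \<le> v")
    case True
    have av: "a \<le> v" using au(1) True by (rule order_trans)
    have jv: "jab \<le> v" unfolding jab_def using av au ats bd2 by (auto intro!: jn_le)
    note c = cmpI1[OF au(1)] cmpI2[OF au(1)] cmpI1[OF au(2)] cmpI2[OF au(2)] cmpI1[OF o1(1)] cmpI2[OF o1(1)] cmpI1[OF o1(2)] cmpI2[OF o1(2)] cmpI1[OF o1(3)] cmpI2[OF o1(3)] cmpI1[OF o1(4)] cmpI2[OF o1(4)] cmpI1[OF o1(5)] cmpI2[OF o1(5)] cmpI1[OF o1(6)] cmpI2[OF o1(6)] cmpI1[OF o1(7)] cmpI2[OF o1(7)] cmpI1[OF o1(8)] cmpI2[OF o1(8)] cmpI1[OF o1(9)] cmpI2[OF o1(9)] cmpI1[OF o1(10)] cmpI2[OF o1(10)] cmpI1[OF o1(11)] cmpI2[OF o1(11)] cmpI1[OF o1(12)] cmpI2[OF o1(12)] cmpI1[OF o1(13)] cmpI2[OF o1(13)] cmpI1[OF o1(14)]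 cmpI2[OF o1(14)] cmpI1[OF o1(15)] cmpI2[OF o1(15)] cmpI1[OF o1(16)] cmpI2[OF o1(16)] cmpI1[OF o1(17)] cmpI2[OF o1(17)] cmpI1[OF o1(18)] cmpI2[OF o1(18)] cmpI1[OF o1(19)] cmpI2[OF o1(19)] cmpI1[OF o1(20)] cmpI2[OF o1(20)] cmpI1[OF o1(21)] cmpI2[OF o1(21)] cmpI1[OF True] cmpI2[OF True] cmpI1[OF av] cmpI2[OF av] cmpI1[OF jv] cmpI2[OF jv]
    have "hpl ?G [a0, ma, a, u, v] [a0, ma, a, v]"
      using tri_del[where xs="[a0, ma]" and x=a and y=u and z=v and ys="[]"]
      by (simp add: okl_Cons2 okl_single c inG inG2)
    also have "hpl ?G \<dots> [a0, ma, a, jab, v]"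
      using tri_ins[where xs="[a0, ma]" and x=a and y=jab and z=v and ys="[]"]
      by (simp add: okl_Cons2 okl_single c inG inG2)
    also have "hpl ?G \<dots> [a0, ma, a, jab, b, v]"
      using tri_ins[where xs="[a0, ma, a]" and x=jab and y=b and z=v and ys="[]"]
      by (simp add: okl_Cons2 okl_single c inG inG2)
    finally show ?thesis .
  next
    case False
    then have vu: "v \<le> u" using uv(3) by (auto simp: cmp_def)
    have bu: "b \<le> u" using au(2) vu by (rule order_trans)
    have ju: "jab \<le> u" unfolding jab_def using bu au ats bd2 by (auto intro!: jn_le)
    note c = cmpI1[OF au(1)] cmpI2[OF au(1)] cmpI1[OF au(2)] cmpI2[OF au(2)] cmpI1[OF o1(1)] cmpI2[OF o1(1)] cmpI1[OF o1(2)] cmpI2[OF o1(2)] cmpI1[OF o1(3)] cmpI2[OF o1(3)] cmpI1[OF o1(4)] cmpI2[OF o1(4)] cmpI1[OF o1(5)] cmpI2[OF o1(5)] cmpI1[OF o1(6)] cmpI2[OF o1(6)] cmpI1[OF o1(7)] cmpI2[OF o1(7)] cmpI1[OF o1(8)] cmpI2[OF o1(8)] cmpI1[OF o1(9)] cmpI2[OF o1(9)] cmpI1[OF o1(10)] cmpI2[OF o1(10)] cmpI1[OF o1(11)] cmpI2[OF o1(11)] cmpI1[OF o1(12)] cmpI2[OF o1(12)] cmpI1[OF o1(13)] cmpI2[OF o1(13)] cmpI1[OF o1(14)] cmpI2[OF o1(14)] cmpI1[OF o1(15)] cmpI2[OF o1(15)] cmpI1[OF o1(16)] cmpI2[OF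 o1(16)] cmpI1[OF o1(17)] cmpI2[OF o1(17)] cmpI1[OF o1(18)] cmpI2[OF o1(18)] cmpI1[OF o1(19)] cmpI2[OF o1(19)] cmpI1[OF o1(20)] cmpI2[OF o1(20)] cmpI1[OF o1(21)] cmpI2[OF o1(21)] cmpI1[OF vu] cmpI2[OF vu] cmpI1[OF bu] cmpI2[OF bu] cmpI1[OF ju] cmpI2[OF ju]
    have "hpl ?G [a0, ma, a, u, v] [a0, ma, a, u, b, v]"
      using tri_ins[where xs="[a0, ma, a]" and x=u and y=b and z=v and ys="[]"]
      by (simp add: okl_Cons2 okl_single c inG inG2)
    also have "hpl ?G \<dots> [a0, ma, a, jab, u, b, v]"
      using tri_ins[where xs="[a0, ma]" and x=a and y=jab and z=u and ys="[b, v]"]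
      by (simp add: okl_Cons2 okl_single c inG inG2)
    also have "hpl ?G \<dots> [a0, ma, a, jab, b, v]"
      using tri_del[where xs="[a0, ma, a]" and x=jab and y=u and z=b and ys="[v]"]
      by (simp add: okl_Cons2 okl_single c inG inG2)
    finally show ?thesis .
  qed
  have okl1: "okl ?G [a0, ma, a, jab, b, v]"
    using inG inG2 o1 au by (simp add: okl_Cons2 okl_single cmpI1 cmpI2)
  have s2: "hpl ?G ([a0, ma] @ a # jab # b # [v]) ([a0, ma] @ a # jac # c # jbc # b # [v])"
    by (rule step2) (use okl1 inG inG2 o1 o2 in simp_all)
  have okl2: "okl ?G [a0, ma, a, jac, c, jbc, b, v]"
    using inG inG2 o1 au by (simp add: okl_Cons2 okl_single cmpI1 cmpI2)
  have s3: "hpl ?G (a0 # ma # a # jac # c # [jbc, b, v]) (a0 # mc # c # [jbc, b, v])"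
    by (rule triangle[where M=M1]) (use okl2 inG inG2 o1 o2 in simp_all)
  have okl3: "okl ?G [a0, mc, c, jbc, b, v]"
    using inG inG2 o1 au by (simp add: okl_Cons2 okl_single cmpI1 cmpI2)
  have s4: "hpl ?G (a0 # mc # c # jbc # b # [v]) (a0 # mb # b # [v])"
    by (rule triangle[where M=M2]) (use okl3 inG inG2 o1 o2 in simp_all)
  have s2': "hpl ?G [a0, ma, a, jab, b, v] [a0, ma, a, jac, c, jbc, b, v]" using s2 by simp
  have s3': "hpl ?G [a0, ma, a, jac, c, jbc, b, v] [a0, mc, c, jbc, b, v]" using s3 by simp
  have s4': "hpl ?G [a0, mc, c, jbc, b, v] [a0, mb, b, v]" using s4 by simp
  have "hpl ?G [a0, ma, a, u, v] [a0, mb, b, v]"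
    using hpl_trans[OF hpl_trans[OF hpl_trans[OF s1 s2'] s3'] s4'] .
  then show ?thesis by (simp add: stdl_def a_def b_def ma_def mb_def)
qed

end


section \<open>Standard paths and the single-piece lemma\<close>

definition wv :: "('a \<Rightarrow> real) \<Rightarrow> 'a" where "wv f = (SOME x. f x > 0)"

lemma YG_point: "f \<in> YG F \<Longrightarrow> \<exists>D. okD F D \<and> f \<in> geom_simplex D"
  by (auto simp: YG_def)

lemma wv: assumes "f \<in> geom_simplex D" shows "f (wv f) > 0" "wv f \<in> D"
proof -
  have "\<exists>x. f x > 0" using gs_ex_pos[OF assms] by blast
  from someI_ex[OF this] show "f (wv f) > 0" by (simp add: wv_def)
  then show "wv f \<in> D" using gs_pos[OF assms] by blast
qed

lemma okD_mono: "okD F D \<Longrightarrow> F \<subseteq> G \<Longrightarrow> okD G D"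
  by (auto simp: okD_def)

lemma okD_cmp: "okD F D \<Longrightarrow> x \<in> D \<Longrightarrow> y \<in> D \<Longrightarrow> cmp x y"
  by (auto simp: okD_def is_chain_def cmp_def)

lemma gs_YG: "okD F D \<Longrightarrow> geom_simplex D \<subseteq> YG F"
  by (auto simp: YG_def)

lemma okD_finite: "okD F D \<Longrightarrow> finite D" by (simp add: okD_def)

context PS
begin

lemma GF_mono: "YG F \<subseteq> YG (GF F)"
  by (rule YG_mono) (rule F_GF)

lemma stdl_ok: assumes "w \<in> F" shows "okl (GF F) (stdl w)"
proof -
  have A: "atm w \<in> AtS F" "a0 \<in> AtS F" using assms by (auto simp: AtS_def)
  have ats: "is_atom (atm w)" "is_atom a0" using A AtS_atoms by auto
  have bd: "has_upper_bound {a0, atm w}" using pair_ub ats by simp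
  have m: "jn {a0, atm w} \<in> GF F" using A bd by (intro jn_GF) auto
  have o: "a0 \<le> jn {a0, atm w}" "atm w \<le> jn {a0, atm w}"
    using ats bd by (auto intro!: jn_ub)
  have "a0 \<in> GF F" "atm w \<in> GF F" "w \<in> GF F" using A AtS_GF F_GF assms by auto
  then show ?thesis using m o atm_spec(2)[of w]
    by (simp add: stdl_def okl_Cons2 okl_single cmpI1 cmpI2)
qed

definition std :: "('a \<Rightarrow> real) \<Rightarrow> real \<Rightarrow> 'a \<Rightarrow> real" where
  "std f = vp (stdl (wv f)) +++ sg (dl (wv f)) f"

lemma std_ok:
  assumes "f \<in> YG F"
  shows "path (std f)" "path_image (std f) \<subseteq> YG (GF F)" "pathstart (std f) = dl a0" "pathfinish (std f) = f"
proof -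
  obtain D where D: "okD F D" "f \<in> geom_simplex D" using YG_point[OF assms] by blast
  have w: "wv f \<in> D" using wv[OF D(2)] by simp
  have wF: "wv f \<in> F" using w D(1) by (auto simp: okD_def)
  have v: "path (vp (stdl (wv f)))" "path_image (vp (stdl (wv f))) \<subseteq> YG (GF F)"
    using vp_ok[OF stdl_ok[OF wF]] by auto
  have fin: "pathfinish (vp (stdl (wv f))) = dl (wv f)" by (simp add: vp_finish stdl_def)
  have st: "pathstart (vp (stdl (wv f))) = dl a0" by (simp add: vp_start stdl_def)
  have "path_image (sg (dl (wv f)) f) \<subseteq> geom_simplex D"
    using D w by (intro sg_image dl_in) (auto simp: okD_def)
  then have si: "path_image (sg (dl (wv f)) f) \<subseteq> YG (GF F)"
    using gs_YG[OF D(1)] GF_mono by blast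
  show "path (std f)" using v fin by (simp add: std_def)
  show "path_image (std f) \<subseteq> YG (GF F)" unfolding std_def
    by (rule subset_path_image_join) (use v si in auto)
  show "pathstart (std f) = dl a0" using st by (simp add: std_def)
  show "pathfinish (std f) = f" by (simp add: std_def)
qed

lemma vert_step:
  assumes "w \<in> F" "v \<in> F" "cmp w v"
  shows "homotopic_paths (YG (GF F)) (vp (stdl w) +++ e w v) (vp (stdl v))"
proof -
  let ?S = "YG (GF F)"
  have okw: "okl (GF F) (stdl w)" using stdl_ok assms by simp
  have vG: "v \<in> GF F" "w \<in> GF F" using F_GF assms by auto
  have okwv: "okl (GF F) [w, v]" using vG assms(3) by (simp add: okl_Cons2 okl_single)
  have ew: "path_image (e w v) \<subseteq> ?S" using e_image[OF assms(3) vG(2,1)] .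
  have vw: "path (vp (stdl w))" "path_image (vp (stdl w)) \<subseteq> ?S" using vp_ok[OF okw] by auto
  have fin: "pathfinish (vp (stdl w)) = dl w" by (simp add: vp_finish stdl_def)
  have "homotopic_paths ?S (e w v) (e w v +++ (\<lambda>_. pathfinish (e w v)))"
    by (rule homotopic_paths_sym[OF hp_rid]) (use ew in auto)
  then have h1: "homotopic_paths ?S (e w v) (vp [w, v])" by simp
  have "homotopic_paths ?S (vp (stdl w) +++ e w v) (vp (stdl w) +++ vp [w, v])"
    using vw fin h1 by (intro homotopic_paths_join) auto
  also have "homotopic_paths ?S (vp (stdl w) +++ vp [w, v]) (vp (stdl w @ [v]))"
  proof -
    have "stdl w = [a0, jn {a0, atm w}, atm w] @ [w]" by (simp add: stdl_def)
    then show ?thesis using app_vp[of "GF F" "[a0, jn {a0, atm w}, atm w]" w "[v]"] okw okwv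
      by (simp add: stdl_def)
  qed
  also have "homotopic_paths ?S (vp (stdl w @ [v])) (vp (stdl v))"
    using vertex_lemma[OF assms] by (simp add: hpl_def)
  finally show ?thesis .
qed


lemma cone_step:
  assumes fg: "f \<in> YG F" "g \<in> YG F" and gam: "path \<gamma>" "path_image \<gamma> \<subseteq> YG F"
    "pathstart \<gamma> = f" "pathfinish \<gamma> = g" and pos: "\<And>s. s \<in> {0..1} \<Longrightarrow> \<gamma> s v > 0"
  shows "homotopic_paths (YG (GF F)) \<gamma> (sg f (dl v) +++ sg (dl v) g)"
proof -
  let ?S = "YG (GF F)"
  define \<rho> where "\<rho> t = max 0 (min 1 (4 * t - 2))" for t :: real
  have \<rho>c: "continuous_on {0..1} \<rho>" unfolding \<rho>_def by (intro continuous_intros)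
  have \<rho>01: "\<rho> \<in> {0..1} \<rightarrow> {0..1}" by (auto simp: \<rho>_def)
  have \<rho>0: "\<rho> 0 = 0" and \<rho>1: "\<rho> 1 = 1" by (auto simp: \<rho>_def)
  have gS: "path_image \<gamma> \<subseteq> ?S" using gam(2) GF_mono by blast
  have h1: "homotopic_paths ?S \<gamma> (\<lambda>t. \<gamma> (\<rho> t))"
    by (rule homotopic_paths_reparametrize[OF gam(1) gS \<rho>c \<rho>01 \<rho>0 \<rho>1]) simp
  have gin: "\<gamma> s \<in> YG F" if "s \<in> {0..1}" for s using gam(2) that by (auto simp: path_image_def)
  have D: "\<exists>D. okD (GF F) D \<and> \<gamma> s \<in> geom_simplex D \<and> dl v \<in> geom_simplex D" if s: "s \<in> {0..1}" for s
  proof -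
    obtain D where D: "okD F D" "\<gamma> s \<in> geom_simplex D" using YG_point[OF gin[OF s]] by blast
    have "v \<in> D" using gs_pos[OF D(2) pos[OF s]] .
    then have "dl v \<in> geom_simplex D" using D(1) by (intro dl_in) (auto simp: okD_def)
    then show ?thesis using D okD_mono[OF D(1) F_GF] by blast
  qed
  have f0: "\<gamma> 0 = f" "\<gamma> 1 = g" using gam(3,4) by (auto simp: pathstart_def pathfinish_def)
  let ?R = "sg f (dl v) +++ ((\<lambda>_. dl v) +++ sg (dl v) g)"
  have h2: "homotopic_paths ?S (\<lambda>t. \<gamma> (\<rho> t)) ?R"
  proof (rule lin_hom)
    show "path (\<lambda>t. \<gamma> (\<rho> t))"
      using gam(1) \<rho>c \<rho>01 unfolding path_def
      by (intro continuous_on_compose2[where g=\<gamma> and f=\<rho> and t="{0..1}"]) auto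
    show "path ?R" by simp
    show "\<gamma> (\<rho> 0) = ?R 0" using f0 \<rho>0 by (simp add: joinpaths_def sg_def)
    show "\<gamma> (\<rho> 1) = ?R 1" using f0 \<rho>1 by (simp add: joinpaths_def sg_def)
    fix t :: real assume t: "t \<in> {0..1}"
    show "\<exists>D. okD (GF F) D \<and> \<gamma> (\<rho> t) \<in> geom_simplex D \<and> ?R t \<in> geom_simplex D"
    proof (cases "t \<le> 1/2")
      case True
      then have r: "\<rho> t = 0" by (simp add: \<rho>_def)
      have R: "?R t = cmb (2 * t) f (dl v)" using True by (simp add: joinpaths_def sg_def)
      obtain D where "okD (GF F) D" "\<gamma> 0 \<in> geom_simplex D" "dl v \<in> geom_simplex D" using D[of 0] by auto
      moreover have "2 * t \<in> {0..1}" using t True by auto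
      ultimately show ?thesis using r R f0 gs_cmb by metis
    next
      case False
      show ?thesis
      proof (cases "t \<le> 3/4")
        case True
        then have r: "\<rho> t = 4 * t - 2" using False by (simp add: \<rho>_def)
        have R: "?R t = dl v" using True False by (simp add: joinpaths_def sg_def)
        have "4 * t - 2 \<in> {0..1}" using True False by auto
        then show ?thesis using D[of "4 * t - 2"] r R by auto
      next
        case False2: False
        then have r: "\<rho> t = 1" using False by (simp add: \<rho>_def)
        have R: "?R t = cmb (4 * t - 3) (dl v) g" using False False2
          by (simp add: joinpaths_def sg_def algebra_simps)
        obtain D where "okD (GF F) D" "\<gamma> 1 \<in> geom_simplex D" "dl v \<in> geom_simplex D" using D[of 1] by auto
        moreover have "4 * t - 3 \<in> {0..1}" using t False2 by auto
        ultimately show ?thesis using r R f0 gs_cmb by metis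
      qed
    qed
  qed
  have dvS: "dl v \<in> ?S"
  proof -
    obtain D where "okD (GF F) D" "dl v \<in> geom_simplex D" using D[of 0] by auto
    then show ?thesis by (rule YGI)
  qed
  have sgS: "path_image (sg (dl v) g) \<subseteq> ?S"
  proof -
    obtain D where D1: "okD (GF F) D" "\<gamma> 1 \<in> geom_simplex D" "dl v \<in> geom_simplex D" using D[of 1] by auto
    then have "path_image (sg (dl v) g) \<subseteq> geom_simplex D" using f0 by (intro sg_image) auto
    then show ?thesis using gs_YG[OF D1(1)] by blast
  qed
  have sgS2: "path_image (sg f (dl v)) \<subseteq> ?S"
  proof -
    obtain D where D1: "okD (GF F) D" "\<gamma> 0 \<in> geom_simplex D" "dl v \<in> geom_simplex D" using D[of 0] by auto
    then have "path_image (sg f (dl v)) \<subseteq> geom_simplex D" using f0 by (intro sg_image) auto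
    then show ?thesis using gs_YG[OF D1(1)] by blast
  qed
  have h3: "homotopic_paths ?S ((\<lambda>_. dl v) +++ sg (dl v) g) (sg (dl v) g)"
    using hp_lid[of "sg (dl v) g" ?S] sgS by simp
  have h4: "homotopic_paths ?S ?R (sg f (dl v) +++ sg (dl v) g)"
    using sgS2 h3 by (intro homotopic_paths_join) auto
  show ?thesis using h1 h2 h4 homotopic_paths_trans by blast
qed


lemma piece:
  assumes fg: "f \<in> YG F" "g \<in> YG F" and gam: "path \<gamma>" "path_image \<gamma> \<subseteq> YG F"
    "pathstart \<gamma> = f" "pathfinish \<gamma> = g" and pos: "\<And>s. s \<in> {0..1} \<Longrightarrow> \<gamma> s v > 0"
  shows "homotopic_paths (YG (GF F)) (std f +++ \<gamma>) (std g)"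
proof -
  let ?S = "YG (GF F)"
  have f0: "\<gamma> 0 = f" "\<gamma> 1 = g" using gam(3,4) by (auto simp: pathstart_def pathfinish_def)
  obtain Df where Df: "okD F Df" "f \<in> geom_simplex Df" using YG_point[OF fg(1)] by blast
  obtain Dg where Dg: "okD F Dg" "g \<in> geom_simplex Dg" using YG_point[OF fg(2)] by blast
  define wf where "wf = wv f"
  define wg where "wg = wv g"
  have wD: "wf \<in> Df" "wg \<in> Dg" using wv(2)[OF Df(2)] wv(2)[OF Dg(2)] by (auto simp: wf_def wg_def)
  have vD: "v \<in> Df" "v \<in> Dg" using gs_pos[OF Df(2)] gs_pos[OF Dg(2)] pos[of 0] pos[of 1] f0 by auto
  have inF: "wf \<in> F" "wg \<in> F" "v \<in> F" using wD vD Df(1) Dg(1) by (auto simp: okD_def)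
  have c: "cmp wf v" "cmp v wg" using okD_cmp[OF Df(1) wD(1) vD(1)] okD_cmp[OF Dg(1) vD(2) wD(2)] by auto
  have DfG: "okD (GF F) Df" and DgG: "okD (GF F) Dg" using okD_mono[OF Df(1) F_GF] okD_mono[OF Dg(1) F_GF] by auto
  have fDf: "finite Df" "finite Dg" using Df(1) Dg(1) by (auto simp: okD_def)
  have dlf: "dl wf \<in> geom_simplex Df" "dl v \<in> geom_simplex Df" using wD vD fDf by (auto intro: dl_in)
  have dlg: "dl wg \<in> geom_simplex Dg" "dl v \<in> geom_simplex Dg" using wD vD fDf by (auto intro: dl_in)
  have Sf: "geom_simplex Df \<subseteq> ?S" and Sg: "geom_simplex Dg \<subseteq> ?S" using gs_YG[OF DfG] gs_YG[OF DgG] by auto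
  define s1 where "s1 = sg (dl wf) f"
  define a where "a = sg f (dl v)"
  define b where "b = sg (dl v) g"
  define t where "t = sg (dl wg) g"
  have is1: "path_image s1 \<subseteq> geom_simplex Df" unfolding s1_def using dlf Df(2) by (intro sg_image) auto
  have ia: "path_image a \<subseteq> geom_simplex Df" unfolding a_def using dlf Df(2) by (intro sg_image) auto
  have ib: "path_image b \<subseteq> geom_simplex Dg" unfolding b_def using dlg Dg(2) by (intro sg_image) auto
  have it: "path_image t \<subseteq> geom_simplex Dg" unfolding t_def using dlg Dg(2) by (intro sg_image) auto
  have ie1: "path_image (e wf v) \<subseteq> geom_simplex Df" using wD vD fDf by (intro e_image_gs) auto
  have ie2: "path_image (e v wg) \<subseteq> geom_simplex Dg" using wD vD fDf by (intro e_image_gs) auto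
  have P: "path s1" "path a" "path b" "path t" by (simp_all add: s1_def a_def b_def t_def)
  have I: "path_image s1 \<subseteq> ?S" "path_image a \<subseteq> ?S" "path_image b \<subseteq> ?S" "path_image t \<subseteq> ?S"
    "path_image (e wf v) \<subseteq> ?S" "path_image (e v wg) \<subseteq> ?S"
    using is1 ia ib it ie1 ie2 Sf Sg by blast+
  have E: "pathstart s1 = dl wf" "pathfinish s1 = f" "pathstart a = f" "pathfinish a = dl v"
    "pathstart b = dl v" "pathfinish b = g" "pathstart t = dl wg" "pathfinish t = g"
    by (simp_all add: s1_def a_def b_def t_def)
  define Vf where "Vf = vp (stdl wf)"
  define Vv where "Vv = vp (stdl v)"
  define Vg where "Vg = vp (stdl wg)"
  have V: "path Vf" "path_image Vf \<subseteq> ?S" "path Vv" "path_image Vv \<subseteq> ?S" "path Vg" "path_image Vg \<subseteq> ?S"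
    using vp_ok[OF stdl_ok[OF inF(1)]] vp_ok[OF stdl_ok[OF inF(3)]] vp_ok[OF stdl_ok[OF inF(2)]]
    by (auto simp: Vf_def Vv_def Vg_def)
  have VE: "pathfinish Vf = dl wf" "pathfinish Vv = dl v" "pathfinish Vg = dl wg"
    by (simp_all add: Vf_def Vv_def Vg_def vp_finish stdl_def)
  have stdf: "std f = Vf +++ s1" by (simp add: std_def Vf_def s1_def wf_def)
  have stdg: "std g = Vg +++ t" by (simp add: std_def Vg_def t_def wg_def)
  have cone: "homotopic_paths ?S \<gamma> (a +++ b)"
    unfolding a_def b_def by (rule cone_step[OF fg gam pos])
  have isa: "path_image (s1 +++ a) \<subseteq> geom_simplex Df" by (rule subset_path_image_join[OF is1 ia])
  have l1: "homotopic_paths ?S (s1 +++ a) (e wf v)"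
    by (rule lin_hom2[OF _ _ _ _ DfG isa ie1]) (use P E in auto)
  have iet: "path_image (e v wg +++ t) \<subseteq> geom_simplex Dg" by (rule subset_path_image_join[OF ie2 it])
  have l2: "homotopic_paths ?S b (e v wg +++ t)"
    by (rule lin_hom2[OF _ _ _ _ DgG ib iet]) (use P E in auto)
  have vs1: "homotopic_paths ?S (Vf +++ e wf v) Vv"
    using vert_step[OF inF(1,3) c(1)] by (simp add: Vf_def Vv_def)
  have vs2: "homotopic_paths ?S (Vv +++ e v wg) Vg"
    using vert_step[OF inF(3,2) c(2)] by (simp add: Vv_def Vg_def)
  have J: "path_image (a +++ b) \<subseteq> ?S" "path_image (s1 +++ a) \<subseteq> ?S"
    "path_image (e wf v +++ b) \<subseteq> ?S" "path_image (e v wg +++ t) \<subseteq> ?S"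
    "path_image (Vf +++ e wf v) \<subseteq> ?S" "path_image (Vv +++ e v wg) \<subseteq> ?S"
    "path_image (Vf +++ s1) \<subseteq> ?S"
    by (rule subset_path_image_join[OF I(2) I(3)] subset_path_image_join[OF I(1) I(2)]
        subset_path_image_join[OF I(5) I(3)] subset_path_image_join[OF I(6) I(4)]
        subset_path_image_join[OF V(2) I(5)] subset_path_image_join[OF V(4) I(6)]
        subset_path_image_join[OF V(2) I(1)])+
  have J2: "path_image (s1 +++ (a +++ b)) \<subseteq> ?S" by (rule subset_path_image_join[OF I(1) J(1)])
  have "homotopic_paths ?S (std f +++ \<gamma>) ((Vf +++ s1) +++ (a +++ b))"
    unfolding stdf using V P I E VE J J2 gam cone gam
    by (intro homotopic_paths_join) auto
  also have "homotopic_paths ?S \<dots> (Vf +++ (s1 +++ (a +++ b)))"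
    using V P I E VE J J2 gam by (intro homotopic_paths_sym[OF homotopic_paths_assoc])
      auto
  also have "homotopic_paths ?S \<dots> (Vf +++ ((s1 +++ a) +++ b))"
    using V P I E VE J J2 gam by (intro homotopic_paths_join homotopic_paths_assoc) auto
  also have "homotopic_paths ?S \<dots> (Vf +++ (e wf v +++ b))"
    using V P I E VE J J2 gam l1 by (intro homotopic_paths_join) auto
  also have "homotopic_paths ?S \<dots> ((Vf +++ e wf v) +++ b)"
    using V P I E VE J J2 gam by (intro homotopic_paths_assoc) auto
  also have "homotopic_paths ?S \<dots> (Vv +++ b)"
    using V P I E VE J J2 gam vs1 by (intro homotopic_paths_join) auto
  also have "homotopic_paths ?S \<dots> (Vv +++ (e v wg +++ t))"
    using V P I E VE J J2 gam l2 by (intro homotopic_paths_join) auto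
  also have "homotopic_paths ?S \<dots> ((Vv +++ e v wg) +++ t)"
    using V P I E VE J J2 gam by (intro homotopic_paths_assoc) auto
  also have "homotopic_paths ?S \<dots> (Vg +++ t)"
    using V P I E VE J J2 gam vs2 by (intro homotopic_paths_join) auto
  finally show ?thesis unfolding stdg .
qed


lemma loop_null:
  assumes fF: "finite F" and p: "path p" "path_image p \<subseteq> YG F" "p 1 = p 0"
  shows "homotopic_paths (YG (GF F)) p (\<lambda>_. p 0)"
proof -
  let ?S = "YG (GF F)"
  have pin: "p s \<in> YG F" if "s \<in> {0..1}" for s using p(2) that by (auto simp: path_image_def)
  have pS: "path_image p \<subseteq> ?S" using p(2) GF_mono by blast
  have pos: "\<exists>v\<in>F. p s v > 0" if s: "s \<in> {0..1}" for s
  proof -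
    obtain D where D: "okD F D" "p s \<in> geom_simplex D" using YG_point[OF pin[OF s]] by blast
    then show ?thesis using wv[OF D(2)] by (auto simp: okD_def)
  qed
  have cv: "continuous_on {0..1} (\<lambda>s. p s v)" for v
    using p(1) unfolding path_def by (rule continuous_on_product_then_coordinatewise)
  have exO: "\<exists>A. open A \<and> A \<inter> {0..1} = (\<lambda>s. p s v) -` {0<..} \<inter> {0..1}" for v
    using cv[of v] unfolding continuous_on_open_invariant by auto
  define Op where "Op v = (SOME A. open A \<and> A \<inter> {0..1} = (\<lambda>s. p s v) -` {0<..} \<inter> {0..1})" for v
  have Op: "open (Op v)" "Op v \<inter> {0..1} = (\<lambda>s. p s v) -` {0<..} \<inter> {0..1}" for v
    using someI_ex[OF exO[of v]] by (auto simp: Op_def)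
  have cov: "{0..1} \<subseteq> \<Union>(Op ` F)"
  proof
    fix s :: real assume s: "s \<in> {0..1}"
    then obtain v where v: "v \<in> F" "p s v > 0" using pos by blast
    then have "s \<in> Op v \<inter> {0..1}" using Op(2)[of v] s by auto
    then show "s \<in> \<Union>(Op ` F)" using v by auto
  qed
  obtain \<epsilon> where \<epsilon>: "0 < \<epsilon>" "\<And>x. x \<in> {0..1} \<Longrightarrow> \<exists>G \<in> Op ` F. ball x \<epsilon> \<subseteq> G"
    using Heine_Borel_lemma[OF compact_Icc cov] Op(1) by blast
  obtain n :: nat where n: "inverse (real (Suc n)) < \<epsilon>" using reals_Archimedean[OF \<epsilon>(1)] by blast
  define N where "N = Suc n"
  have N: "N > 0" "1 / real N < \<epsilon>" using n by (auto simp: N_def divide_inverse)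
  have ivl: "\<exists>v\<in>F. \<forall>s\<in>{real k / real N .. real (Suc k) / real N}. p s v > 0" if k: "k < N" for k
  proof -
    have x: "real k / real N \<in> {0..1}" using k N(1) by auto
    obtain v where v: "v \<in> F" "ball (real k / real N) \<epsilon> \<subseteq> Op v" using \<epsilon>(2)[OF x] by blast
    have "p s v > 0" if s: "s \<in> {real k / real N .. real (Suc k) / real N}" for s
    proof -
      have "real (Suc k) / real N = real k / real N + 1 / real N" by (simp add: add_divide_distrib)
      then have "dist s (real k / real N) \<le> 1 / real N" using s by (auto simp: dist_real_def)
      then have "s \<in> ball (real k / real N) \<epsilon>" using N(2) by (auto simp: dist_commute)
      moreover have "s \<in> {0..1}"
      proof -
        have "real (Suc k) \<le> real N" using k by simp
        then have "real (Suc k) / real N \<le> 1" using N(1) by (simp add: divide_le_eq_1)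
        moreover have "0 \<le> real k / real N" by simp
        ultimately show ?thesis using s unfolding atLeastAtMost_iff by linarith
      qed
      ultimately have "s \<in> Op v \<inter> {0..1}" using v(2) by auto
      then show ?thesis using Op(2)[of v] by auto
    qed
    then show ?thesis using v(1) by blast
  qed
  define \<sigma> where "\<sigma> = std (p 0)"
  have p0: "p 0 \<in> YG F" using pin by simp
  have \<sigma>: "path \<sigma>" "path_image \<sigma> \<subseteq> ?S" "pathfinish \<sigma> = p 0"
    using std_ok[OF p0] by (auto simp: \<sigma>_def)
  have ind: "homotopic_paths ?S (\<sigma> +++ sp 0 (real k / real N) p) (std (p (real k / real N)))"
    if "k \<le> N" for k
    using that
  proof (induction k)
    case 0
    have "sp 0 0 p = (\<lambda>_. pathfinish \<sigma>)" using \<sigma>(3) by (auto simp: sp_def)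
    then show ?case using hp_rid[OF \<sigma>(1,2)] by (simp add: \<sigma>_def)
  next
    case (Suc k)
    let ?v = "real k / real N" and ?w = "real (Suc k) / real N"
    have kN: "k < N" using Suc.prems by simp
    have vw: "0 \<le> ?v" "?v \<le> ?w" "?w \<le> 1" "0 < ?w"
      using kN N(1) by (auto simp: divide_right_mono divide_le_eq_1)
    have ih: "homotopic_paths ?S (\<sigma> +++ sp 0 ?v p) (std (p ?v))" using Suc.IH kN by simp
    let ?A = "sp 0 ?v p" and ?B = "sp ?v ?w p"
    have i01: "(0::real) \<in> {0..1}" "?v \<in> {0..1}" "?w \<in> {0..1}" using vw by auto
    have A: "path ?A" "path_image ?A \<subseteq> ?S"
      using path_sp[OF p(1) i01(1) i01(2)] subset_trans[OF path_image_sp[OF i01(1) i01(2)] pS] by auto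
    have B: "path ?B" "path_image ?B \<subseteq> YG F"
      using path_sp[OF p(1) i01(2) i01(3)] subset_trans[OF path_image_sp[OF i01(2) i01(3)] p(2)] by auto
    have BS: "path_image ?B \<subseteq> ?S" using B(2) GF_mono by blast
    have Ae: "pathstart ?A = p 0" "pathfinish ?A = p ?v" by (auto simp: sp_def pathstart_def pathfinish_def)
    have Be: "pathstart ?B = p ?v" "pathfinish ?B = p ?w" by (auto simp: sp_def pathstart_def pathfinish_def)
    have js: "homotopic_paths ?S (?A +++ ?B) (sp 0 ?w p)"
      by (rule hp_join_sps[OF p(1) pS]) (use vw in auto)
    obtain v where v: "v \<in> F" "\<forall>s\<in>{?v..?w}. p s v > 0" using ivl[OF kN] by blast
    have Bpos: "?B s v > 0" if "s \<in> {0..1}" for s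
    proof -
      have "(?w - ?v) * s + ?v \<in> {?v..?w}"
      proof -
        have "0 \<le> (?w - ?v) * s" using that vw by auto
        moreover have "(?w - ?v) * s \<le> (?w - ?v)" using that vw by (intro mult_left_le) auto
        ultimately show ?thesis by auto
      qed
      then show ?thesis using v(2) by (simp add: sp_def)
    qed
    have s0: "pathstart (sp 0 ?w p) = p 0" by (simp add: sp_def pathstart_def)
    have "homotopic_paths ?S (\<sigma> +++ sp 0 ?w p) (\<sigma> +++ (?A +++ ?B))"
      by (rule homotopic_paths_join[OF _ homotopic_paths_sym[OF js]]) (use \<sigma> s0 in auto)
    also have "homotopic_paths ?S \<dots> ((\<sigma> +++ ?A) +++ ?B)"
      using \<sigma> A B BS Ae Be by (intro homotopic_paths_assoc) auto
    also have "homotopic_paths ?S \<dots> (std (p ?v) +++ ?B)"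
      using ih B BS Be Ae by (intro homotopic_paths_join) auto
    also have "homotopic_paths ?S \<dots> (std (p ?w))"
      by (rule piece[OF pin pin B Be Bpos]) (use vw in auto)
    finally show ?case .
  qed
  have "homotopic_paths ?S (\<sigma> +++ sp 0 1 p) (std (p 1))"
    using ind[of N] N(1) by simp
  moreover have "sp 0 1 p = p" by (auto simp: sp_def)
  ultimately have main: "homotopic_paths ?S (\<sigma> +++ p) \<sigma>" using N(1) p(3) by (simp add: \<sigma>_def)
  have ps: "pathstart p = p 0" by (simp add: pathstart_def)
  have rv: "path (reversepath \<sigma>)" "path_image (reversepath \<sigma>) \<subseteq> ?S" using \<sigma> by auto
  have cc: "(\<lambda>_::real. pathstart p) = (\<lambda>_. pathfinish \<sigma>)" using \<sigma>(3) ps by simp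
  have "homotopic_paths ?S p ((\<lambda>_. pathstart p) +++ p)"
    using hp_lid[OF p(1) pS] by (rule homotopic_paths_sym)
  also have "homotopic_paths ?S \<dots> ((reversepath \<sigma> +++ \<sigma>) +++ p)"
    unfolding cc
    by (rule homotopic_paths_join[OF homotopic_paths_sym[OF hp_linv[OF \<sigma>(1,2)]]]) (use p(1) pS ps \<sigma>(3) in auto)
  also have "homotopic_paths ?S \<dots> (reversepath \<sigma> +++ (\<sigma> +++ p))"
    using \<sigma> p(1) pS ps rv by (intro homotopic_paths_sym[OF homotopic_paths_assoc]) auto
  also have "homotopic_paths ?S \<dots> (reversepath \<sigma> +++ \<sigma>)"
    using \<sigma> main rv by (intro homotopic_paths_join) auto
  also have "homotopic_paths ?S \<dots> (\<lambda>_. p 0)"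
    using hp_linv[OF \<sigma>(1,2)] \<sigma>(3) by simp
  finally show ?thesis .
qed

end


lemma hl_const_path:
  assumes "path \<gamma>" "path_image \<gamma> \<subseteq> S"
  shows "homotopic_loops S (\<lambda>_. \<gamma> 0) (\<lambda>_. \<gamma> 1)"
  unfolding homotopic_loops
proof (intro exI conjI)
  show "continuous_on ({0..1} \<times> {0..1}) (\<lambda>y. \<gamma> (fst y))"
    using assms(1) unfolding path_def
    by (rule continuous_on_compose2) (auto intro: continuous_intros)
  show "(\<lambda>y. \<gamma> (fst y)) \<in> {0..1} \<times> {0..1} \<rightarrow> S"
    using assms(2) by (auto simp: path_image_def)
qed (auto simp: pathstart_def pathfinish_def)

lemma homotopic_with_target:
  assumes "homotopic_with P X Y f g"
    and "\<And>h. continuous_map (prod_topology (top_of_set {0..1::real}) X) Y h \<Longrightarrow> continuous_map (prod_topology (top_of_set {0..1::real}) X) Y' h"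
  shows "homotopic_with P X Y' f g"
proof -
  obtain h where hh: "continuous_map (prod_topology (top_of_set {0..1::real}) X) Y h \<and>
    (\<forall>x. h (0, x) = f x) \<and> (\<forall>x. h (1, x) = g x) \<and> (\<forall>t\<in>{0..1}. P (\<lambda>x. h (t, x)))"
    using assms(1) unfolding homotopic_with_def by blast
  note h = conjunct1[OF hh] conjunct2[OF hh]
  show ?thesis unfolding homotopic_with_def
    by (rule exI[of _ h]) (use hh assms(2)[OF h(1)] in simp)
qed

lemma hl_RX:
  fixes G :: "'a::order set"
  assumes "homotopic_loops (YG G) p q" "finite G"
  shows "homotopic_with (\<lambda>r. r 1 = r 0) (top_of_set {0..1}) (RX::('a \<Rightarrow> real) topology) p q"
proof -
  have "homotopic_with (\<lambda>r. pathfinish r = pathstart r) (top_of_set {0..1}) (top_of_set (YG G)) p q"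
    using assms(1) by (simp add: homotopic_loops_def)
  then have "homotopic_with (\<lambda>r. pathfinish r = pathstart r) (top_of_set {0..1}) (RX::('a \<Rightarrow> real) topology) p q"
    by (rule homotopic_with_target) (rule cont_YG_RX[OF _ assms(2)])
  then show ?thesis
    by (rule homotopic_with_mono) (simp add: pathstart_def pathfinish_def)
qed

theorem mainTheorem3:
  assumes "atomized TYPE('a::order)"
    and "\<forall>a1 a2::'a. is_atom a1 \<and> is_atom a2 \<longrightarrow> \<not> generates {a1, a2}"
    and "is_atom (a0::'a)"
    and "\<forall>a1 a2::'a. is_atom a1 \<and> is_atom a2 \<longrightarrow>
           (\<exists>a3. is_atom a3 \<and> has_upper_bound {a1, a2, a3} \<and>
                 has_upper_bound {a0, a1, a3} \<and> has_upper_bound {a0, a2, a3})"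
  shows "simply_connected_space (order_complex_realization TYPE('a))"
proof -
  interpret PS a0 using assms by unfold_locales
  have key: "homotopic_with (\<lambda>r. r 1 = r 0) (top_of_set {0..1}) (RX::('a \<Rightarrow> real) topology) p (\<lambda>_. dl a0)"
    if pa: "pathin RX p" "p 1 = p 0" for p
  proof -
    obtain F where F: "finite F" "p ` {0..1} \<subseteq> YG F" using pathin_finite_support[OF pa(1)] by blast
    have pp: "path p" using pathin_RX_path(1)[OF pa(1)] .
    have pim: "path_image p \<subseteq> YG F" using F(2) by (simp add: path_image_def)
    have h1: "homotopic_paths (YG (GF F)) p (\<lambda>_. p 0)" by (rule loop_null[OF F(1) pp pim pa(2)])
    have h2: "homotopic_loops (YG (GF F)) p (\<lambda>_. p 0)"
      using homotopic_paths_imp_homotopic_loops[OF h1] pa(2) by (simp add: pathstart_def pathfinish_def)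
    have p0: "p 0 \<in> YG F" using F(2) by auto
    let ?r = "reversepath (std (p 0))"
    have r: "path ?r" "path_image ?r \<subseteq> YG (GF F)" using std_ok[OF p0] by simp_all
    have r2: "?r 0 = p 0" "?r 1 = dl a0"
      using std_ok[OF p0] by (auto simp: reversepath_def pathstart_def pathfinish_def)
    have h3: "homotopic_loops (YG (GF F)) (\<lambda>_. p 0) (\<lambda>_. dl a0)"
      using hl_const_path[OF r(1,2)] r2 by simp
    have "homotopic_loops (YG (GF F)) p (\<lambda>_. dl a0)" by (rule homotopic_loops_trans[OF h2 h3])
    then show ?thesis by (rule hl_RX) (rule finite_GF[OF F(1)])
  qed
  show ?thesis unfolding simply_connected_space_def
  proof (intro allI impI)
    fix p q :: "real \<Rightarrow> 'a \<Rightarrow> real"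
    assume a: "pathin RX p \<and> p 1 = p 0 \<and> pathin RX q \<and> q 1 = q 0"
    have hp: "homotopic_with (\<lambda>r. r 1 = r 0) (top_of_set {0..1}) RX p (\<lambda>_. dl a0)" using key a by blast
    have "homotopic_with (\<lambda>r. r 1 = r 0) (top_of_set {0..1}) RX q (\<lambda>_. dl a0)" using key a by blast
    then have hq: "homotopic_with (\<lambda>r. r 1 = r 0) (top_of_set {0..1}) RX (\<lambda>_. dl a0) q"
      by (rule homotopic_with_symD)
    show "homotopic_with (\<lambda>r. r 1 = r 0) (top_of_set {0..1}) RX p q"
      by (rule homotopic_with_trans[OF hp hq])
  qed
qed


end
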